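(* Any reflection operator $R_{|\phi\rangle}$, where $|\phi\rangle$ is an $n$-qubit unit vector whose coordinates in the computational basis have the form $((a+b\sqrt{2})+i(c+d\sqrt{2}))/\sqrt{2}^{\kappa}$ with $a,b,c,d$ integers, can be implemented using $O(2^n n\kappa)$ Clifford and T gates and at most one ancilla.
   Context: For a unit vector $|\psi\rangle$, the reflection operator is $R_{|\psi\rangle}=\mathbb{I}-2|\psi\rangle\langle\psi|$. The T gate is $\mathrm{diag}(1,e^{i\pi/4})$; Clifford circuits are generated by CNOT, Hadamard and Phase gates. *)

theory Defs
  imports Complex_Main
begin

text \<open>Quantum states on m qubits are functions nat => complex, of which only the
  indices below 2^m matter. Qubit k of a basis index x is bit k of x.\<close>

datatype gate = Hg nat | Sg nat | Tg nat | CNOTg nat nat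

text \<open>Apply a single-qubit gate u (u out_bit in_bit) to qubit k.\<close>
definition app1 :: "(bool \<Rightarrow> bool \<Rightarrow> complex) \<Rightarrow> nat \<Rightarrow> (nat \<Rightarrow> complex) \<Rightarrow> (nat \<Rightarrow> complex)" where
  "app1 u k v = (\<lambda>x. u (bit x k) (bit x k) * v x + u (bit x k) (\<not> bit x k) * v (flip_bit k x))"

definition hadamard :: "bool \<Rightarrow> bool \<Rightarrow> complex" where
  "hadamard r c = (if r \<and> c then -1 else 1) / complex_of_real (sqrt 2)"

definition phase_gate :: "bool \<Rightarrow> bool \<Rightarrow> complex" where
  "phase_gate r c = (if r = c then (if r then \<i> else 1) else 0)"

definition t_gate :: "bool \<Rightarrow> bool \<Rightarrow> complex" where
  "t_gate r c = (if r = c then (if r then cis (pi / 4) else 1) else 0)"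

fun apply_gate :: "gate \<Rightarrow> (nat \<Rightarrow> complex) \<Rightarrow> (nat \<Rightarrow> complex)" where
  "apply_gate (Hg k) v = app1 hadamard k v"
| "apply_gate (Sg k) v = app1 phase_gate k v"
| "apply_gate (Tg k) v = app1 t_gate k v"
| "apply_gate (CNOTg c t) v = (\<lambda>x. v (if bit x c then flip_bit t x else x))"

fun run :: "gate list \<Rightarrow> (nat \<Rightarrow> complex) \<Rightarrow> (nat \<Rightarrow> complex)" where
  "run [] v = v"
| "run (g # gs) v = run gs (apply_gate g v)"

fun gate_ok :: "nat \<Rightarrow> gate \<Rightarrow> bool" where
  "gate_ok m (Hg k) = (k < m)"
| "gate_ok m (Sg k) = (k < m)"
| "gate_ok m (Tg k) = (k < m)"
| "gate_ok m (CNOTg c t) = (c < m \<and> t < m \<and> c \<noteq> t)"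

definition circuit_on :: "nat \<Rightarrow> gate list \<Rightarrow> bool" where
  "circuit_on m gs = (\<forall>g \<in> set gs. gate_ok m g)"

definition inner :: "nat \<Rightarrow> (nat \<Rightarrow> complex) \<Rightarrow> (nat \<Rightarrow> complex) \<Rightarrow> complex" where
  "inner n u v = (\<Sum>y<2^n. cnj (u y) * v y)"

definition unit_state :: "nat \<Rightarrow> (nat \<Rightarrow> complex) \<Rightarrow> bool" where
  "unit_state n phi = ((\<Sum>y<2^n. (cmod (phi y))^2) = 1)"

definition reflection :: "nat \<Rightarrow> (nat \<Rightarrow> complex) \<Rightarrow> (nat \<Rightarrow> complex) \<Rightarrow> (nat \<Rightarrow> complex)" where
  "reflection n phi v = (\<lambda>x. v x - 2 * phi x * inner n phi v)"

definition coords_form :: "nat \<Rightarrow> nat \<Rightarrow> (nat \<Rightarrow> complex) \<Rightarrow> bool" where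
  "coords_form n \<kappa> phi = (\<forall>x<2^n. \<exists>a b c d :: int.
      phi x = Complex (of_int a + of_int b * sqrt 2) (of_int c + of_int d * sqrt 2)
              / complex_of_real (sqrt 2 ^ \<kappa>))"

text \<open>Embed an n-qubit state as (state tensor |0>) on n+1 qubits, ancilla = qubit n.\<close>
definition with_ancilla :: "nat \<Rightarrow> (nat \<Rightarrow> complex) \<Rightarrow> (nat \<Rightarrow> complex)" where
  "with_ancilla n v = (\<lambda>x. if x < 2^n then v x else 0)"

text \<open>The circuit gs on n+1 qubits implements the n-qubit operator U using one clean
  ancilla (initialised to |0> and returned to |0>).\<close>
definition implements_with_ancilla :: "nat \<Rightarrow> gate list \<Rightarrow> ((nat \<Rightarrow> complex) \<Rightarrow> (nat \<Rightarrow> complex)) \<Rightarrow> bool" where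
  "implements_with_ancilla n gs U =
     (circuit_on (n + 1) gs \<and>
      (\<forall>v x. x < 2^(n+1) \<longrightarrow> run gs (with_ancilla n v) x = with_ancilla n (U v) x))"

end

theory Submission
  imports Defs
begin


lemma run_append[simp]: "run (gs @ hs) v = run hs (run gs v)"
  by (induction gs arbitrary: v) auto

lemma bit_flip_nat[simp]: "bit (flip_bit k (x::nat)) q = (if q = k then \<not> bit x q else bit x q)"
  by (auto simp: bit_flip_bit_iff)

lemma flip_flip[simp]: "flip_bit k (flip_bit k (x::nat)) = x"
  by (rule bit_eqI) simp

type_synonym mat2 = "bool \<Rightarrow> bool \<Rightarrow> complex"

definition app1g :: "(nat \<Rightarrow> bool) \<Rightarrow> mat2 \<Rightarrow> mat2 \<Rightarrow> nat \<Rightarrow> (nat \<Rightarrow> complex) \<Rightarrow> (nat \<Rightarrow> complex)" where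
  "app1g P A B k v = (\<lambda>x. (if P x then B else A) (bit x k) (bit x k) * v x
        + (if P x then B else A) (bit x k) (\<not> bit x k) * v (flip_bit k x))"

definition mm :: "mat2 \<Rightarrow> mat2 \<Rightarrow> mat2" where
  "mm A B = (\<lambda>r c. A r False * B False c + A r True * B True c)"

lemma app1g_comp:
  assumes "\<And>x. P (flip_bit k x) = P x"
  shows "app1g P A1 B1 k (app1g P A0 B0 k v) = app1g P (mm A1 A0) (mm B1 B0) k v"
proof
  fix x
  show "app1g P A1 B1 k (app1g P A0 B0 k v) x = app1g P (mm A1 A0) (mm B1 B0) k v x"
    using assms[of x]
    by (cases "P x"; cases "bit x k") (simp_all add: app1g_def mm_def algebra_simps)
qed

lemma app1_eq: "app1 u k v = app1g P u u k v"
  by (simp add: app1_def app1g_def)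

definition Im :: mat2 where "Im r c = (if r = c then 1 else 0)"
definition Xm :: mat2 where "Xm r c = (if r = c then 0 else 1)"

lemma cnot_eq: "c \<noteq> t \<Longrightarrow> apply_gate (CNOTg c t) v = app1g (\<lambda>x. bit x c) Im Xm t v"
  by (auto simp: app1g_def Im_def Xm_def)

lemma app1g_Im: "app1g P Im Im k v = v"
  by (auto simp: app1g_def Im_def)


definition w :: complex where "w = cis (pi/4)"
definition rt :: complex where "rt = complex_of_real (sqrt 2)"

lemma rt_sq: "rt * rt = 2" by (simp add: rt_def flip: of_real_mult)
lemma rt_nz[simp]: "rt \<noteq> 0" by (simp add: rt_def)

lemma w_eq: "w = (1 + \<i>) / rt"
proof -
  have "cis (pi/4) = Complex (sqrt 2 / 2) (sqrt 2 / 2)" by (simp add: cis.ctr cos_45 sin_45)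
  also have "\<dots> = (1 + \<i>) / rt"
    by (simp add: rt_def complex_eq_iff Re_divide Im_divide power2_eq_square real_div_sqrt)
  finally show ?thesis by (simp add: w_def)
qed

lemma w_sq: "w * w = \<i>"
  using rt_sq by (simp add: w_eq field_simps algebra_simps)

definition dgm :: "complex \<Rightarrow> complex \<Rightarrow> mat2" where
  "dgm a b r c = (if r = c then (if r then b else a) else 0)"

lemma mm_dgm: "mm (dgm a b) (dgm c d) = dgm (a*c) (b*d)"
  by (auto simp: mm_def dgm_def fun_eq_iff)

lemma t_dgm: "t_gate = dgm 1 w" by (auto simp: t_gate_def dgm_def w_def fun_eq_iff)
lemma s_dgm: "phase_gate = dgm 1 \<i>" by (auto simp: phase_gate_def dgm_def fun_eq_iff)
lemma Im_dgm: "Im = dgm 1 1" by (auto simp: Im_def dgm_def fun_eq_iff)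

lemma hadamard_rt: "hadamard r c = (if r \<and> c then -1 else 1) / rt"
  by (simp add: hadamard_def rt_def)


lemma ii: "\<i> * \<i> = -1" by simp
lemma i1[simp]: "\<i> + 1 \<noteq> 0" "1 + \<i> \<noteq> 0" by (simp_all add: complex_eq_iff)

lemma w7: "w^7 = (1 - \<i>) / rt"
proof -
  have "w^8 = 1" by (simp add: w_def DeMoivre)
  hence "w^7 * w = 1" by (simp add: power_Suc2[symmetric] del: power_Suc)
  hence "w^7 = 1 / w" using \<open>w^8 = 1\<close> by (metis nonzero_eq_divide_eq one_neq_zero mult_zero_right)
  also have "\<dots> = (1 - \<i>) / rt"
  proof -
    have "(1 + \<i>) * (1 - \<i>) = 2" by (simp add: algebra_simps)
    thus ?thesis unfolding w_eq using rt_sq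
      by (simp add: divide_simps) (metis mult.commute)
  qed
  finally show ?thesis .
qed

lemma rt_inv: "1/rt = rt/2" using rt_sq by (simp add: field_simps)

lemma CH_mat: "mm (dgm 1 \<i>) (mm hadamard (mm (dgm 1 w) (mm Xm (mm (dgm 1 (w^7)) (mm hadamard (dgm 1 (\<i>^3))))))) = hadamard"
  unfolding w7
  unfolding w_eq
  apply (simp add: fun_eq_iff mm_def dgm_def hadamard_rt Xm_def)
  apply (auto simp: field_simps power3_eq_cube)
  by (rule rt_sq)


definition dg :: "(nat \<Rightarrow> complex) \<Rightarrow> (nat \<Rightarrow> complex) \<Rightarrow> (nat \<Rightarrow> complex)" where
  "dg f v = (\<lambda>x. f x * v x)"

lemma w8: "w^8 = 1" by (simp add: w_def DeMoivre)
lemma w4: "w^4 = -1" by (simp add: w_def DeMoivre)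

lemma w_pow_mod: "w^n = w^(n mod 8)"
proof -
  have "w^n = w^(8 * (n div 8) + n mod 8)" by simp
  also have "\<dots> = w^(n mod 8)" by (simp only: power_add power_mult w8) simp
  finally show ?thesis .
qed

lemma run_T: "run [Tg q] v = dg (\<lambda>x. w ^ (if bit x q then 1 else 0)) v"
  by (auto simp: dg_def app1_def t_gate_def w_def)

lemma run_Tn: "run (replicate k (Tg q)) v = dg (\<lambda>x. w ^ (if bit x q then k else 0)) v"
proof (induction k arbitrary: v)
  case 0 then show ?case by (simp add: dg_def)
next
  case (Suc k)
  have "run (replicate (Suc k) (Tg q)) v = run (replicate k (Tg q)) (run [Tg q] v)" by simp
  also have "\<dots> = dg (\<lambda>x. w ^ (if bit x q then Suc k else 0)) v"
    unfolding Suc run_T by (auto simp: dg_def fun_eq_iff)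
  finally show ?case .
qed

definition cmap :: "nat \<Rightarrow> nat \<Rightarrow> nat \<Rightarrow> nat" where
  "cmap c t x = (if bit x c then flip_bit t x else x)"

lemma run_cnot: "run [CNOTg c t] v = (\<lambda>x. v (cmap c t x))"
  by (simp add: cmap_def)

lemma cmap_invol: "c \<noteq> t \<Longrightarrow> cmap c t (cmap c t x) = x"
  by (simp add: cmap_def)

lemma bit_cmap: "c \<noteq> t \<Longrightarrow> bit (cmap c t x) q = (if q = t then bit x q \<noteq> bit x c else bit x q)"
  by (auto simp: cmap_def)

definition cj :: "nat \<Rightarrow> nat \<Rightarrow> gate list \<Rightarrow> gate list" where
  "cj c t gs = CNOTg c t # gs @ [CNOTg c t]"

lemma run_cj:
  assumes "c \<noteq> t" "\<And>v. run gs v = dg f v"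
  shows "run (cj c t gs) v = dg (\<lambda>x. f (cmap c t x)) v"
  using assms by (simp add: cj_def dg_def run_cnot cmap_invol del: run.simps(2)) (auto simp: cmap_def fun_eq_iff)

lemma run_dg_app:
  assumes "\<And>v. run gs v = dg f v" "\<And>v. run hs v = dg g v"
  shows "run (gs @ hs) v = dg (\<lambda>x. f x * g x) v"
  using assms by (simp add: dg_def fun_eq_iff mult.commute mult.left_commute)

abbreviation T7 :: "nat \<Rightarrow> gate list" where "T7 q \<equiv> replicate 7 (Tg q)"

definition ccz :: "nat \<Rightarrow> nat \<Rightarrow> nat \<Rightarrow> gate list" where
  "ccz a b c = [Tg a, Tg b, Tg c] @ cj a b (T7 b) @ cj b c (T7 c) @ cj a c (T7 c) @ cj a c (cj b c [Tg c])"

lemma w4': "w * (w * (w * w)) = -1" using w4 by (simp add: power4_eq_xxxx mult.assoc)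

lemma w16: "w^16 = 1" using w8 by (metis power_mult_numeral num_double numeral_times_numeral power_one)

lemma run_TTT: "run [Tg a, Tg b, Tg c] v = dg (\<lambda>x. w ^ (if bit x a then 1 else 0) * w ^ (if bit x b then 1 else 0) * w ^ (if bit x c then 1 else 0)) v"
  using run_dg_app[OF run_dg_app[OF run_T run_T] run_T, of a b c v] by simp

lemma run_ccz:
  assumes "a \<noteq> b" "b \<noteq> c" "a \<noteq> c"
  shows "run (ccz a b c) v = dg (\<lambda>x. if bit x a \<and> bit x b \<and> bit x c then -1 else 1) v"
proof -
  have e: "run (ccz a b c) v = dg (\<lambda>x. (w ^ (if bit x a then 1 else 0) * w ^ (if bit x b then 1 else 0) * w ^ (if bit x c then 1 else 0))
     * (w ^ (if bit (cmap a b x) b then 7 else 0) * (w ^ (if bit (cmap b c x) c then 7 else 0) * (w ^ (if bit (cmap a c x) c then 7 else 0)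
     * w ^ (if bit (cmap b c (cmap a c x)) c then 1 else 0))))) v"
    unfolding ccz_def
    apply (rule run_dg_app[OF run_TTT run_dg_app[OF run_cj[OF _ run_Tn] run_dg_app[OF run_cj[OF _ run_Tn] run_dg_app[OF run_cj[OF _ run_Tn] run_cj[OF _ run_cj[OF _ run_T]]]]]])
    using assms by auto
  show ?thesis unfolding e dg_def
    using assms w4 w16 w4'
    by (auto simp: fun_eq_iff bit_cmap power_add[symmetric])
qed

lemma dg_app1g: "dg (\<lambda>x. if P x then (if bit x t then b1 else b0) else (if bit x t then a1 else a0)) v
   = app1g P (dgm a0 a1) (dgm b0 b1) t v"
  by (auto simp: dg_def app1g_def dgm_def fun_eq_iff)

lemma app1g_IX: "app1g P Im Xm t v = (\<lambda>x. v (if P x then flip_bit t x else x))"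
  by (auto simp: app1g_def Im_def Xm_def fun_eq_iff)

lemma HZH: "mm hadamard (mm (dgm 1 (-1)) hadamard) = Xm"
  by (auto simp: fun_eq_iff mm_def dgm_def hadamard_rt Xm_def field_simps rt_sq)
lemma HIH: "mm hadamard (mm (dgm 1 1) hadamard) = Im"
  by (auto simp: fun_eq_iff mm_def dgm_def hadamard_rt Im_def field_simps rt_sq)

definition toff :: "nat \<Rightarrow> nat \<Rightarrow> nat \<Rightarrow> gate list" where
  "toff a b t = Hg t # ccz a b t @ [Hg t]"

definition tmap :: "nat \<Rightarrow> nat \<Rightarrow> nat \<Rightarrow> nat \<Rightarrow> nat" where
  "tmap a b t x = (if bit x a \<and> bit x b then flip_bit t x else x)"

lemma run_toff:
  assumes "a \<noteq> b" "b \<noteq> t" "a \<noteq> t"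
  shows "run (toff a b t) v = (\<lambda>x. v (tmap a b t x))"
proof -
  let ?P = "\<lambda>x::nat. bit x a \<and> bit x b"
  have inv: "\<And>x. ?P (flip_bit t x) = ?P x" using assms by simp
  have c: "run (ccz a b t) u = app1g ?P (dgm 1 1) (dgm 1 (-1)) t u" for u
    unfolding run_ccz[OF assms(1,2,3)] dg_app1g[symmetric]
    by (rule arg_cong[where f="\<lambda>f. dg f u"]) auto
  have "run (toff a b t) v = app1g ?P hadamard hadamard t (run (ccz a b t) (app1g ?P hadamard hadamard t v))"
    by (simp add: toff_def app1_eq[of _ _ _ ?P])
  also have "\<dots> = app1g ?P Im Xm t v"
    unfolding c app1g_comp[of ?P, OF inv] HZH HIH ..
  finally show ?thesis by (simp add: app1g_IX tmap_def)
qed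


definition Xc :: "nat \<Rightarrow> gate list" where "Xc q = [Hg q, Sg q, Sg q, Hg q]"

lemma HSSH: "mm hadamard (mm phase_gate (mm phase_gate hadamard)) = Xm"
  by (auto simp: fun_eq_iff mm_def phase_gate_def hadamard_rt Xm_def field_simps rt_sq)

lemma run_Xc: "run (Xc q) v = (\<lambda>x. v (flip_bit q x))"
proof -
  let ?P = "\<lambda>x::nat. False"
  have "run (Xc q) v = app1g ?P hadamard hadamard q (app1g ?P phase_gate phase_gate q
        (app1g ?P phase_gate phase_gate q (app1g ?P hadamard hadamard q v)))"
    by (simp add: Xc_def app1_eq[of _ _ _ ?P])
  also have "\<dots> = app1g ?P Xm Xm q v"
    by (simp add: app1g_comp[of ?P] HSSH)
  finally show ?thesis by (auto simp: app1g_def Xm_def fun_eq_iff)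
qed

fun pal :: "nat list \<Rightarrow> nat list \<Rightarrow> gate list" where
  "pal (c # c' # cs) (e # e' # es) = toff c e' e @ pal (c' # cs) (e' # es) @ toff c e' e"
| "pal (c # c' # cs) [e] = toff c c' e"
| "pal _ _ = []"

fun palmap :: "nat list \<Rightarrow> nat list \<Rightarrow> nat \<Rightarrow> nat" where
  "palmap (c # c' # cs) (e # e' # es) x = tmap c e' e (palmap (c' # cs) (e' # es) (tmap c e' e x))"
| "palmap (c # c' # cs) [e] x = tmap c c' e x"
| "palmap _ _ x = x"

lemma run_pal: "distinct (cs @ es) \<Longrightarrow> run (pal cs es) v = (\<lambda>x. v (palmap cs es x))"
proof (induction cs es arbitrary: v rule: pal.induct)
  case (1 c c' cs e e' es)
  then show ?case by (simp add: run_toff)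
next
  case (2 c c' cs e)
  then show ?case by (simp add: run_toff)
qed auto

definition andl :: "nat list \<Rightarrow> nat \<Rightarrow> bool" where
  "andl cs x = (\<forall>c\<in>set cs. bit x c)"

definition tog :: "nat list \<Rightarrow> nat list \<Rightarrow> nat \<Rightarrow> nat \<Rightarrow> bool" where
  "tog cs es x q = (\<exists>p<length es. es!p = q \<and> andl (drop p cs) x)"

lemma tog_cons: "tog (c # cs) (e # es) x q = ((q = e \<and> andl (c # cs) x) \<or> tog cs es x q)"
  unfolding tog_def by (auto simp: less_Suc_eq_0_disj)

lemma bit_tmap: "bit (tmap a b t x) q = (if q = t then bit x q \<noteq> (bit x a \<and> bit x b) else bit x q)"
  by (auto simp: tmap_def)

lemma andl_cong: "(\<And>c. c \<in> set cs \<Longrightarrow> bit x c = bit y c) \<Longrightarrow> andl cs x = andl cs y"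
  by (auto simp: andl_def)

lemma tog_cong: "(\<And>c. c \<in> set cs \<Longrightarrow> bit x c = bit y c) \<Longrightarrow> tog cs es x q = tog cs es y q"
proof -
  assume a: "\<And>c. c \<in> set cs \<Longrightarrow> bit x c = bit y c"
  have "andl (drop p cs) x = andl (drop p cs) y" for p
    by (rule andl_cong) (use a in \<open>meson in_set_dropD\<close>)
  thus ?thesis unfolding tog_def by simp
qed

lemma tog_notin: "q \<notin> set es \<Longrightarrow> \<not> tog cs es x q"
  by (auto simp: tog_def dest!: nth_mem)

lemma bit_palmap:
  "distinct (cs @ es) \<Longrightarrow> length cs = Suc (length es) \<Longrightarrow>
   bit (palmap cs es x) q = (bit x q \<noteq> tog cs es x q)"
proof (induction cs es arbitrary: x q rule: pal.induct)
  case (1 c c' cs e e' es)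
  let ?y = "tmap c e' e x"
  let ?z = "palmap (c' # cs) (e' # es) ?y"
  have IH: "bit ?z r = (bit ?y r \<noteq> tog (c' # cs) (e' # es) ?y r)" for r
    using 1 by simp
  have tc: "tog (c' # cs) (e' # es) ?y r = tog (c' # cs) (e' # es) x r" for r
    using 1(2) by (intro tog_cong) (auto simp: bit_tmap)
  have "c \<notin> set (e' # es)" using 1(2) by auto
  hence zc: "bit ?z c = bit x c" using IH[of c] 1(2) tc[of c] tog_notin[of c "e' # es" "c' # cs" x]
    by (auto simp: bit_tmap)
  have n1: "\<not> tog cs es x e'" using 1(2) by (intro tog_notin) auto
  have a1: "andl (c' # cs) ?y = andl (c' # cs) x" using 1(2) by (intro andl_cong) (auto simp: bit_tmap)
  have ze': "bit ?z e' = (bit x e' \<noteq> andl (c' # cs) x)" using IH[of e'] tc[of e'] 1(2) n1 a1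
    by (auto simp: bit_tmap tog_cons)
  have ac: "andl (c # c' # cs) x = (bit x c \<and> andl (c' # cs) x)" by (simp add: andl_def)
  have "bit (palmap (c # c' # cs) (e # e' # es) x) q = bit (tmap c e' e ?z) q" by simp
  also have "\<dots> = (bit x q \<noteq> tog (c # c' # cs) (e # e' # es) x q)"
  proof (cases "q = e")
    case True
    have "\<not> tog (c' # cs) (e' # es) x e" using 1(2) by (intro tog_notin) auto
    then show ?thesis using True IH[of e] tc[of e] zc ze' ac 1(2)
      by (auto simp: bit_tmap tog_cons)
  next
    case False
    then show ?thesis using IH[of q] tc[of q] by (auto simp: bit_tmap tog_cons)
  qed
  finally show ?case .
next
  case (2 c c' cs e)
  then show ?case by (auto simp: bit_tmap tog_def andl_def)
qed (auto simp: tog_def)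


definition ladder :: "nat list \<Rightarrow> nat \<Rightarrow> nat list \<Rightarrow> gate list" where
  "ladder cs t ds = pal cs (t # take (length cs - 2) ds) @ pal (tl cs) (take (length cs - 2) ds)"

lemma flip_comm: "flip_bit a (flip_bit b (x::nat)) = flip_bit b (flip_bit a x)"
  by (rule bit_eqI) auto

lemma andl_flip: "q \<notin> set cs \<Longrightarrow> andl cs (flip_bit q x) = andl cs x"
  by (auto simp: andl_def)

lemma andl_append: "andl (xs @ ys) x = (andl xs x \<and> andl ys x)"
  by (auto simp: andl_def)

lemma andl_Cons: "andl (c # ys) x = (bit x c \<and> andl ys x)"
  by (auto simp: andl_def)

lemma run_ladder:
  assumes "2 \<le> length cs" "length cs - 2 \<le> length ds" "distinct (t # cs @ ds)"
  shows "run (ladder cs t ds) v = (\<lambda>x. v (if andl cs x then flip_bit t x else x))"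
proof -
  let ?es = "take (length cs - 2) ds"
  have le: "length ?es = length cs - 2" using assms by simp
  have sub: "set ?es \<subseteq> set ds" by (rule set_take_subset)
  have d1: "distinct (cs @ t # ?es)" using assms sub distinct_take[of ds "length cs - 2"] by auto
  have d2: "distinct (tl cs @ ?es)" using d1 by (cases cs) auto
  obtain c cs' where cs: "cs = c # cs'" using assms by (cases cs) auto
  have l1: "length cs = Suc (length (t # ?es))" using le assms by simp
  have l2: "length (tl cs) = Suc (length ?es)" using le assms by (simp add: cs)
  have "run (ladder cs t ds) v = (\<lambda>x. v (palmap cs (t # ?es) (palmap (tl cs) ?es x)))"
    unfolding ladder_def using d1 d2 by (simp add: run_pal)
  moreover have "palmap cs (t # ?es) (palmap (tl cs) ?es x) = (if andl cs x then flip_bit t x else x)" for x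
  proof (rule bit_eqI)
    fix q
    let ?y = "palmap (tl cs) ?es x"
    have hy: "bit ?y r = (bit x r \<noteq> tog (tl cs) ?es x r)" for r
      using bit_palmap[OF d2 l2] .
    have "\<And>r. r \<in> set cs \<Longrightarrow> bit ?y r = bit x r"
      using hy d1 tog_notin[of _ ?es "tl cs" x] by auto
    hence tc: "tog cs (t # ?es) ?y q = tog cs (t # ?es) x q" by (rule tog_cong)
    have tn: "\<not> tog (tl cs) ?es x t" using d1 by (intro tog_notin) auto
    have B: "tog cs (t # ?es) x q = ((q = t \<and> andl cs x) \<or> tog (tl cs) ?es x q)"
      unfolding cs by (simp add: tog_cons)
    have "bit (palmap cs (t # ?es) ?y) q = (bit ?y q \<noteq> tog cs (t # ?es) ?y q)"
      using bit_palmap[OF _ l1] d1 by simp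
    also have "(bit ?y q \<noteq> tog cs (t # ?es) ?y q) = (bit x q \<noteq> (q = t \<and> andl cs x))"
      using tc B hy[of q] tn by (cases "q = t") auto
    finally show "bit (palmap cs (t # ?es) ?y) q = bit (if andl cs x then flip_bit t x else x) q"
      by auto
  qed
  ultimately show ?thesis by simp
qed

definition mcx :: "nat list \<Rightarrow> nat \<Rightarrow> nat \<Rightarrow> gate list" where
  "mcx C a d = (if length C = 0 then Xc a else if length C = 1 then [CNOTg (hd C) a]
     else if length C \<le> 3 then ladder C a [d]
     else (let k = (length C + 1) div 2; A = take k C; B = drop k C;
              L1 = ladder A d (B @ [a]); L2 = ladder (d # B) a A in L1 @ L2 @ L1 @ L2))"

lemma run_mcx:
  assumes "distinct (a # d # C)"
  shows "run (mcx C a d) v = (\<lambda>x. v (if andl C x then flip_bit a x else x))"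
proof -
  consider "length C = 0" | "length C = 1" | "2 \<le> length C \<and> length C \<le> 3" | "4 \<le> length C" by linarith
  then show ?thesis
  proof cases
    case 1 then show ?thesis by (simp add: mcx_def run_Xc andl_def)
  next
    case 2
    then obtain c where "C = [c]" by (cases C) auto
    then show ?thesis using assms by (auto simp: mcx_def andl_def fun_eq_iff)
  next
    case 3
    have "run (ladder C a [d]) v = (\<lambda>x. v (if andl C x then flip_bit a x else x))"
      by (rule run_ladder) (use 3 assms in auto)
    moreover have "mcx C a d = ladder C a [d]" using 3 by (auto simp: mcx_def)
    ultimately show ?thesis by simp
  next
    case 4
    define k where "k = (length C + 1) div 2"
    define A where "A = take k C"
    define B where "B = drop k C"
    have C: "C = A @ B" by (simp add: A_def B_def)
    have lA: "length A = k" "length B = length C - k" using 4 by (auto simp: A_def B_def k_def)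
    have dist: "distinct (a # d # A @ B)" using assms C by simp
    have r1: "run (ladder A d (B @ [a])) u = (\<lambda>x. u (if andl A x then flip_bit d x else x))" for u
      by (rule run_ladder) (use lA 4 dist k_def in auto)
    have r2: "run (ladder (d # B) a A) u = (\<lambda>x. u (if andl (d # B) x then flip_bit a x else x))" for u
      by (rule run_ladder) (use lA 4 dist k_def in auto)
    have e: "mcx C a d = ladder A d (B @ [a]) @ ladder (d # B) a A @ ladder A d (B @ [a]) @ ladder (d # B) a A"
      using 4 by (auto simp: mcx_def Let_def A_def B_def k_def)
    have nA: "a \<notin> set A" "d \<notin> set A" "a \<notin> set B" "d \<notin> set B" "a \<noteq> d" "d \<noteq> a" using dist by auto
    show ?thesis unfolding e
      by (simp add: r1 r2 fun_eq_iff) (auto simp: andl_Cons andl_flip nA C andl_append flip_comm[of d a])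
  qed
qed


definition isg :: "nat \<Rightarrow> nat \<Rightarrow> gate list \<Rightarrow> mat2 \<Rightarrow> mat2 \<Rightarrow> bool" where
  "isg a j gs A B = (\<forall>v. run gs v = app1g (\<lambda>x. bit x a) A B j v)"

lemma isg_app: "a \<noteq> j \<Longrightarrow> isg a j gs A B \<Longrightarrow> isg a j hs C D \<Longrightarrow> isg a j (gs @ hs) (mm C A) (mm D B)"
  unfolding isg_def by (simp add: app1g_comp[of "\<lambda>x. bit x a"])

lemma isg_H: "isg a j [Hg j] hadamard hadamard" by (simp add: isg_def app1_eq)
lemma isg_S: "isg a j [Sg j] (dgm 1 \<i>) (dgm 1 \<i>)" by (simp add: isg_def app1_eq s_dgm)
lemma isg_T: "isg a j [Tg j] (dgm 1 w) (dgm 1 w)" by (simp add: isg_def app1_eq t_dgm)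
lemma isg_CX: "a \<noteq> j \<Longrightarrow> isg a j [CNOTg a j] Im Xm" by (simp add: isg_def app1g_IX)

lemma mm_assoc: "mm (mm A B) C = mm A (mm B C)"
  by (simp add: mm_def fun_eq_iff algebra_simps)


lemma isg_T7: "a \<noteq> j \<Longrightarrow> isg a j (T7 j) (dgm 1 (w^7)) (dgm 1 (w^7))"
proof -
  assume "a \<noteq> j"
  have "isg a j (replicate (Suc k) (Tg j)) (dgm 1 (w^Suc k)) (dgm 1 (w^Suc k))" for k
  proof (induction k)
    case 0 then show ?case using isg_T by simp
  next
    case (Suc k)
    have "isg a j ([Tg j] @ replicate (Suc k) (Tg j)) (mm (dgm 1 (w^Suc k)) (dgm 1 w)) (mm (dgm 1 (w^Suc k)) (dgm 1 w))"
      using isg_app[OF \<open>a \<noteq> j\<close> isg_T Suc] .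
    then show ?case by (simp add: mm_dgm mult.commute)
  qed
  from this[of 6] show ?thesis by (simp add: numeral_eq_Suc)
qed

lemma isg_S3: "a \<noteq> j \<Longrightarrow> isg a j (replicate 3 (Sg j)) (dgm 1 (\<i>^3)) (dgm 1 (\<i>^3))"
proof -
  assume "a \<noteq> j"
  have "replicate 3 (Sg j) = [Sg j] @ [Sg j] @ [Sg j]" by (simp add: numeral_eq_Suc)
  thus ?thesis using isg_app[OF \<open>a \<noteq> j\<close> isg_S isg_app[OF \<open>a \<noteq> j\<close> isg_S isg_S]]
    by (simp add: mm_dgm power3_eq_cube)
qed

definition cz :: "nat \<Rightarrow> nat \<Rightarrow> gate list" where "cz a j = [Hg j, CNOTg a j, Hg j]"
definition ch :: "nat \<Rightarrow> nat \<Rightarrow> gate list" where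
  "ch a j = replicate 3 (Sg j) @ [Hg j] @ T7 j @ [CNOTg a j] @ [Tg j] @ [Hg j] @ [Sg j]"
definition cdm :: "nat \<Rightarrow> nat \<Rightarrow> gate list" where "cdm a j = T7 j @ [CNOTg a j] @ [Tg j] @ [CNOTg a j]"
definition cdmi :: "nat \<Rightarrow> nat \<Rightarrow> gate list" where "cdmi a j = [Tg j] @ [CNOTg a j] @ T7 j @ [CNOTg a j]"

lemma HXH: "mm hadamard (mm Xm hadamard) = dgm 1 (-1)"
  by (auto simp: fun_eq_iff mm_def dgm_def hadamard_rt Xm_def field_simps rt_sq)
lemma HIH': "mm hadamard (mm Im hadamard) = Im"
  by (auto simp: fun_eq_iff mm_def Im_def hadamard_rt field_simps rt_sq)

lemma isg_cz: "a \<noteq> j \<Longrightarrow> isg a j (cz a j) Im (dgm 1 (-1))"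
proof -
  assume aj: "a \<noteq> j"
  have "cz a j = [Hg j] @ [CNOTg a j] @ [Hg j]" by (simp add: cz_def)
  with isg_app[OF aj isg_H isg_app[OF aj isg_CX[OF aj] isg_H]] show ?thesis
    by (simp add: HXH HIH' mm_assoc)
qed

lemma mm_Im: "mm Im A = A" "mm A Im = A" by (auto simp: mm_def Im_def fun_eq_iff)
lemma ww7: "w * w^7 = 1" "w^7 * w = 1" using w8 power_add[of w 1 7] by (simp_all add: mult.commute)

lemma TT7: "mm (dgm 1 w) (mm (dgm 1 (w^7)) A) = A"
  by (auto simp: mm_def dgm_def fun_eq_iff mult.assoc[symmetric] ww7)
lemma HH: "mm hadamard (mm hadamard A) = A"
proof -
  have "mm hadamard hadamard = Im"
    by (auto simp: fun_eq_iff mm_def Im_def hadamard_rt field_simps rt_sq)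
  thus ?thesis by (metis mm_assoc mm_Im(1))
qed
lemma SS3: "mm (dgm 1 \<i>) (dgm 1 (\<i>^3)) = Im"
  by (auto simp: mm_def dgm_def Im_def fun_eq_iff power3_eq_cube)

lemma isg_ch: "a \<noteq> j \<Longrightarrow> isg a j (ch a j) Im hadamard"
proof -
  assume aj: "a \<noteq> j"
  from isg_app[OF aj isg_S3[OF aj] isg_app[OF aj isg_H isg_app[OF aj isg_T7[OF aj] isg_app[OF aj isg_CX[OF aj]
    isg_app[OF aj isg_T isg_app[OF aj isg_H isg_S]]]]]]
  show ?thesis unfolding ch_def
    by (simp add: mm_assoc CH_mat mm_Im TT7 HH SS3)
qed

lemma XTXT7: "mm Xm (mm (dgm 1 w) (mm Xm (dgm 1 (w^7)))) = dgm w (w^7)"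
  by (auto simp: mm_def dgm_def Xm_def fun_eq_iff)
lemma XT7XT: "mm Xm (mm (dgm 1 (w^7)) (mm Xm (dgm 1 w))) = dgm (w^7) w"
  by (auto simp: mm_def dgm_def Xm_def fun_eq_iff)
lemma TT7': "mm (dgm 1 w) (dgm 1 (w^7)) = Im" "mm (dgm 1 (w^7)) (dgm 1 w) = Im"
  by (auto simp: mm_def dgm_def Im_def fun_eq_iff ww7)

lemma isg_cdm: "a \<noteq> j \<Longrightarrow> isg a j (cdm a j) Im (dgm w (w^7))"
proof -
  assume aj: "a \<noteq> j"
  from isg_app[OF aj isg_T7[OF aj] isg_app[OF aj isg_CX[OF aj] isg_app[OF aj isg_T isg_CX[OF aj]]]]
  show ?thesis unfolding cdm_def
    by (simp add: mm_assoc mm_Im TT7' XTXT7)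
qed

lemma isg_cdmi: "a \<noteq> j \<Longrightarrow> isg a j (cdmi a j) Im (dgm (w^7) w)"
proof -
  assume aj: "a \<noteq> j"
  from isg_app[OF aj isg_T isg_app[OF aj isg_CX[OF aj] isg_app[OF aj isg_T7[OF aj] isg_CX[OF aj]]]]
  show ?thesis unfolding cdmi_def
    by (simp add: mm_assoc mm_Im TT7' XT7XT)
qed


lemma lt_pow_bits: "(x::nat) < 2^n \<longleftrightarrow> (\<forall>q\<ge>n. \<not> bit x q)"
proof
  assume "x < 2^n"
  hence "take_bit n x = x" by (simp add: take_bit_nat_eq_self_iff)
  thus "\<forall>q\<ge>n. \<not> bit x q" by (metis bit_take_bit_iff not_le)
next
  assume h: "\<forall>q\<ge>n. \<not> bit x q"
  have hh: "bit x q \<Longrightarrow> q < n" for q using h not_le by blast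
  have "take_bit n x = x" by (rule bit_eqI) (use hh in \<open>auto simp: bit_take_bit_iff\<close>)
  thus "x < 2^n" by (metis take_bit_nat_less_exp)
qed

lemma eq_below: "(x::nat) < 2^n \<Longrightarrow> y < 2^n \<Longrightarrow> (\<forall>q<n. bit x q = bit y q) \<Longrightarrow> x = y"
  by (rule bit_eqI) (metis lt_pow_bits not_le)

lemma bit_fold_flip: "distinct ks \<Longrightarrow> bit (fold flip_bit ks (i::nat)) q = (bit i q \<noteq> (q \<in> set ks))"
  by (induction ks arbitrary: i) auto

definition pimap :: "nat \<Rightarrow> nat list \<Rightarrow> nat \<Rightarrow> nat" where
  "pimap j D i = (if bit i j then fold flip_bit D i else i)"

lemma bit_pimap: "distinct D \<Longrightarrow> j \<notin> set D \<Longrightarrow> bit (pimap j D i) q = (bit i q \<noteq> (bit i j \<and> q \<in> set D))"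
  by (auto simp: pimap_def bit_fold_flip)

lemma run_cnots: "distinct D \<Longrightarrow> j \<notin> set D \<Longrightarrow> run (map (CNOTg j) D) v = (\<lambda>i. v (pimap j D i))"
proof (induction D arbitrary: v)
  case Nil then show ?case by (simp add: pimap_def fun_eq_iff)
next
  case (Cons k D)
  have "run (map (CNOTg j) (k # D)) v = (\<lambda>i. v (cmap j k (pimap j D i)))"
    using Cons by (simp add: cmap_def)
  also have "\<dots> = (\<lambda>i. v (pimap j (k # D) i))"
  proof -
    have "cmap j k (pimap j D i) = pimap j (k # D) i" for i
      by (rule bit_eqI) (use Cons.prems in \<open>auto simp: bit_cmap bit_pimap\<close>)
    thus ?thesis by simp
  qed
  finally show ?case .
qed

lemma run_Xcs: "distinct E \<Longrightarrow> run (concat (map Xc E)) v = (\<lambda>i. v (fold flip_bit E i))"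
proof (induction E arbitrary: v)
  case Nil then show ?case by simp
next
  case (Cons k E)
  have "run (concat (map Xc (k # E))) v = (\<lambda>i. v (flip_bit k (fold flip_bit E i)))"
    using Cons by (simp add: run_Xc)
  also have "\<dots> = (\<lambda>i. v (fold flip_bit (k # E) i))"
  proof -
    have "flip_bit k (fold flip_bit E i) = fold flip_bit (k # E) i" for i :: nat
      by (rule bit_eqI) (use Cons.prems in \<open>auto simp: bit_fold_flip\<close>)
    thus ?thesis by simp
  qed
  finally show ?case .
qed

definition tl2 :: "mat2 \<Rightarrow> nat \<Rightarrow> nat \<Rightarrow> (nat \<Rightarrow> complex) \<Rightarrow> (nat \<Rightarrow> complex)" where
  "tl2 M x y v = (\<lambda>i. if i = x then M False False * v x + M False True * v y
      else if i = y then M True False * v x + M True True * v y else v i)"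

datatype kind = KH | KD | KDi | KZ

fun kmat :: "kind \<Rightarrow> mat2" where
  "kmat KH = hadamard" | "kmat KD = dgm w (w^7)" | "kmat KDi = dgm (w^7) w" | "kmat KZ = dgm 1 (-1)"

fun kcirc :: "kind \<Rightarrow> nat \<Rightarrow> nat \<Rightarrow> gate list" where
  "kcirc KH a j = ch a j" | "kcirc KD a j = cdm a j" | "kcirc KDi a j = cdmi a j" | "kcirc KZ a j = cz a j"

lemma isg_kind: "a \<noteq> j \<Longrightarrow> isg a j (kcirc k a j) Im (kmat k)"
  by (cases k) (simp_all add: isg_ch isg_cdm isg_cdmi isg_cz)

definition swapM :: "mat2 \<Rightarrow> mat2" where "swapM M = (\<lambda>r c. M (\<not> r) (\<not> c))"

definition cgate :: "bool \<Rightarrow> kind \<Rightarrow> nat \<Rightarrow> nat \<Rightarrow> gate list" where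
  "cgate b k a j = (if b then Xc j @ kcirc k a j @ Xc j else kcirc k a j)"

lemma isg_Xc: "isg a j (Xc j) Xm Xm"
  by (auto simp: isg_def run_Xc app1g_def Xm_def)

lemma XMX: "mm Xm (mm M Xm) = swapM M"
  by (auto simp: mm_def Xm_def swapM_def fun_eq_iff)

lemma XX: "mm Xm Xm = Im" by (auto simp: mm_def Xm_def Im_def fun_eq_iff)

lemma isg_cgate: "a \<noteq> j \<Longrightarrow> isg a j (cgate b k a j) Im (if b then swapM (kmat k) else kmat k)"
proof (cases b)
  case True
  assume aj: "a \<noteq> j"
  from isg_app[OF aj isg_Xc isg_app[OF aj isg_kind[OF aj] isg_Xc]]
  show ?thesis using True by (simp add: cgate_def mm_assoc XMX mm_Im XX)
next
  case False
  assume aj: "a \<noteq> j"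
  then show ?thesis using False isg_kind[OF aj] by (simp add: cgate_def)
qed

definition smap :: "nat list \<Rightarrow> nat \<Rightarrow> nat \<Rightarrow> nat" where
  "smap C a i = (if andl C i then flip_bit a i else i)"

definition tl2circ :: "nat \<Rightarrow> kind \<Rightarrow> nat \<Rightarrow> nat \<Rightarrow> gate list" where
  "tl2circ n k x y = (let j = (LEAST j. bit x j \<noteq> bit y j); b = bit x j; base = (if b then y else x);
     D = filter (\<lambda>q. q \<noteq> j \<and> bit x q \<noteq> bit y q) [0..<n];
     E = filter (\<lambda>q. q \<noteq> j \<and> \<not> bit base q) [0..<n];
     C = filter (\<lambda>q. q \<noteq> j) [0..<n];
     G1 = map (CNOTg j) D; G2 = concat (map Xc E); G3 = mcx C n j
   in G1 @ G2 @ G3 @ cgate b k n j @ G3 @ G2 @ G1)"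

lemma tl2circ_correct:
  assumes xn: "x < 2^n" and yn: "y < 2^n" and xy: "x \<noteq> y"
  shows "run (tl2circ n k x y) (with_ancilla n v) = with_ancilla n (tl2 (kmat k) x y v)"
proof -
  define j where "j = (LEAST j. bit x j \<noteq> bit y j)"
  have ex: "\<exists>j. bit x j \<noteq> bit y j" using xy bit_eq_iff by blast
  have hj: "bit x j \<noteq> bit y j" unfolding j_def by (rule LeastI_ex[OF ex])
  have jn: "j < n" using hj xn yn lt_pow_bits not_le by metis
  define b where "b = bit x j"
  define base where "base = (if b then y else x)"
  define other where "other = (if b then x else y)"
  define D where "D = filter (\<lambda>q. q \<noteq> j \<and> bit x q \<noteq> bit y q) [0..<n]"
  define E where "E = filter (\<lambda>q. q \<noteq> j \<and> \<not> bit base q) [0..<n]"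
  define C where "C = filter (\<lambda>q. q \<noteq> j) [0..<n]"
  define M' where "M' = (if b then swapM (kmat k) else kmat k)"
  define \<pi> where "\<pi> = pimap j D"
  define \<tau> where "\<tau> = (fold flip_bit E :: nat \<Rightarrow> nat)"
  define \<sigma> where "\<sigma> = smap C n"
  have dD: "distinct D" "j \<notin> set D" "n \<notin> set D" by (auto simp: D_def)
  have dE: "distinct E" "j \<notin> set E" "n \<notin> set E" by (auto simp: E_def)
  have dC: "distinct (n # j # C)" using jn by (auto simp: C_def)
  have sD: "q \<in> set D \<longleftrightarrow> q < n \<and> q \<noteq> j \<and> bit x q \<noteq> bit y q" for q by (auto simp: D_def)
  have sE: "q \<in> set E \<longleftrightarrow> q < n \<and> q \<noteq> j \<and> \<not> bit base q" for q by (auto simp: E_def)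
  have sC: "andl C z \<longleftrightarrow> (\<forall>q<n. q \<noteq> j \<longrightarrow> bit z q)" for z by (auto simp: C_def andl_def)
  have b\<pi>: "bit (\<pi> z) q = (bit z q \<noteq> (bit z j \<and> q \<in> set D))" for z q
    unfolding \<pi>_def using dD by (simp add: bit_pimap)
  have b\<tau>: "bit (\<tau> z) q = (bit z q \<noteq> (q \<in> set E))" for z q
    unfolding \<tau>_def by (rule bit_fold_flip[OF dE(1)])
  have aC: "andl C (flip_bit q z) = andl C z" if "q = n \<or> q = j" for q z
    using that dC by (intro andl_flip) auto
  have b\<sigma>: "bit (\<sigma> z) q = (bit z q \<noteq> (q = n \<and> andl C z))" for z q
    by (auto simp: \<sigma>_def smap_def)
  have i\<pi>: "\<pi> (\<pi> z) = z" for z by (rule bit_eqI) (use dD in \<open>auto simp: b\<pi>\<close>)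
  have i\<tau>: "\<tau> (\<tau> z) = z" for z by (rule bit_eqI) (auto simp: b\<tau>)
  have i\<sigma>: "\<sigma> (\<sigma> z) = z" for z by (auto simp: \<sigma>_def smap_def aC)
  have c\<sigma>: "\<sigma> (flip_bit j z) = flip_bit j (\<sigma> z)" for z
    by (auto simp: \<sigma>_def smap_def aC flip_comm)
  have c\<tau>: "\<tau> (flip_bit j z) = flip_bit j (\<tau> z)" for z
    by (rule bit_eqI) (use dE in \<open>auto simp: b\<tau>\<close>)
  define pt where "pt i = fold flip_bit D (flip_bit j i)" for i :: nat
  have bpt: "bit (pt i) q = (bit i q \<noteq> (q = j \<or> q \<in> set D))" for i q
    using dD by (auto simp: pt_def bit_fold_flip)
  have K2: "\<pi> (\<tau> (\<sigma> (flip_bit j (\<sigma> (\<tau> (\<pi> i)))))) = pt i" for i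
  proof -
    have "\<pi> (\<tau> (\<sigma> (flip_bit j (\<sigma> (\<tau> (\<pi> i)))))) = \<pi> (flip_bit j (\<pi> i))"
      by (simp add: c\<sigma> c\<tau> i\<sigma> i\<tau>)
    also have "\<dots> = pt i" by (rule bit_eqI) (use dD in \<open>auto simp: b\<pi> bpt\<close>)
    finally show ?thesis .
  qed
  have r1: "run (map (CNOTg j) D) u = (\<lambda>i. u (\<pi> i))" for u
    unfolding \<pi>_def using dD by (simp add: run_cnots)
  have r2: "run (concat (map Xc E)) u = (\<lambda>i. u (\<tau> i))" for u
    unfolding \<tau>_def using dE by (simp add: run_Xcs)
  have r3: "run (mcx C n j) u = (\<lambda>i. u (\<sigma> i))" for u
    unfolding \<sigma>_def smap_def using dC by (simp add: run_mcx)
  have r4: "run (cgate b k n j) u = app1g (\<lambda>x. bit x n) Im M' j u" for u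
    using isg_cgate[of n j b k] jn unfolding isg_def M'_def by auto
  have circ: "tl2circ n k x y = map (CNOTg j) D @ concat (map Xc E) @ mcx C n j @ cgate b k n j
      @ mcx C n j @ concat (map Xc E) @ map (CNOTg j) D"
    unfolding tl2circ_def Let_def j_def[symmetric] b_def[symmetric] base_def[symmetric]
      D_def[symmetric] E_def[symmetric] C_def[symmetric] ..
  have main: "run (tl2circ n k x y) u = (\<lambda>i. app1g (\<lambda>z. bit z n) Im M' j (\<lambda>z. u (\<pi> (\<tau> (\<sigma> z)))) (\<sigma> (\<tau> (\<pi> i))))" for u
    unfolding circ by (simp add: r1 r2 r3 r4)
  have dxy: "bit x q \<noteq> bit y q \<Longrightarrow> q < n" for q using xn yn lt_pow_bits not_le by metis
  have bb: "\<not> bit base j" "bit other j" using hj by (auto simp: base_def other_def b_def)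
  have bo: "bit other q = (bit base q \<noteq> (bit x q \<noteq> bit y q))" for q
    by (auto simp: base_def other_def)
  have bon: "base < 2^n" "other < 2^n" using xn yn by (auto simp: base_def other_def)
  have neq: "base \<noteq> other" using bb by auto
  have xyo: "(i = x \<or> i = y) \<longleftrightarrow> (i = base \<or> i = other)" for i by (auto simp: base_def other_def)
  have pt1: "pt base = other"
    by (rule bit_eqI) (use dxy hj in \<open>auto simp: bpt bo sD bb\<close>)
  have pt2: "pt other = base"
    by (rule bit_eqI) (use dxy hj in \<open>auto simp: bpt bo sD bb\<close>)
  have K5: "andl C (\<tau> (\<pi> i)) \<longleftrightarrow> (i = base \<or> i = other)" if "i < 2^n" for i
  proof -
    have bt: "bit (\<tau> (\<pi> i)) q = ((bit i q \<noteq> (bit i j \<and> bit x q \<noteq> bit y q)) = bit base q)" if "q < n" "q \<noteq> j" for q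
      using that by (auto simp: b\<tau> b\<pi> sD sE)
    show ?thesis
    proof (cases "bit i j")
      case False
      have "andl C (\<tau> (\<pi> i)) \<longleftrightarrow> (\<forall>q<n. bit i q = bit base q)"
        using False bb bt by (auto simp: sC)
      also have "\<dots> \<longleftrightarrow> i = base" using eq_below[OF that bon(1)] by auto
      finally show ?thesis using False bb by auto
    next
      case True
      have "andl C (\<tau> (\<pi> i)) \<longleftrightarrow> (\<forall>q<n. bit i q = bit other q)"
        using True bb bt bo by (auto simp: sC)
      also have "\<dots> \<longleftrightarrow> i = other" using eq_below[OF that bon(2)] by auto
      finally show ?thesis using True bb by auto
    qed
  qed
  show ?thesis
  proof
    fix i
    let ?i' = "\<sigma> (\<tau> (\<pi> i))"
    let ?u = "if bit ?i' n then M' else Im"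
    have K1: "\<pi> (\<tau> (\<sigma> ?i')) = i" by (simp add: i\<sigma> i\<tau> i\<pi>)
    have K3: "bit ?i' j = bit i j" using jn dD dE by (simp add: b\<sigma> b\<tau> b\<pi>)
    have K4: "bit ?i' n = (bit i n \<noteq> andl C (\<tau> (\<pi> i)))" using dD dE by (simp add: b\<sigma> b\<tau> b\<pi>)
    have L: "run (tl2circ n k x y) (with_ancilla n v) i = ?u (bit i j) (bit i j) * with_ancilla n v i
        + ?u (bit i j) (\<not> bit i j) * with_ancilla n v (pt i)"
      unfolding main app1g_def K1 K2 K3 by simp
    show "run (tl2circ n k x y) (with_ancilla n v) i = with_ancilla n (tl2 (kmat k) x y v) i"
    proof (cases "i < 2^n")
      case False
      then obtain q where q: "q \<ge> n" "bit i q" using lt_pow_bits by blast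
      have "bit (pt i) q" using q jn sD by (auto simp: bpt)
      hence "\<not> pt i < 2^n" using q lt_pow_bits by blast
      then show ?thesis using False unfolding L by (simp add: with_ancilla_def)
    next
      case True
      have "\<not> bit i n" using True lt_pow_bits by blast
      hence un: "bit ?i' n = (i = base \<or> i = other)" using K4 K5[OF True] by simp
      consider "i = base" | "i = other" | "i \<noteq> base \<and> i \<noteq> other" by blast
      then show ?thesis
      proof cases
        case 1
        then show ?thesis unfolding L using un bb pt1 bon xy
          by (cases b) (auto simp: base_def other_def M'_def swapM_def tl2_def with_ancilla_def add.commute)
      next
        case 2
        then show ?thesis unfolding L using un bb pt2 bon xy
          by (cases b) (auto simp: base_def other_def M'_def swapM_def tl2_def with_ancilla_def add.commute)
      next
        case 3
        then show ?thesis unfolding L using un True xyo[of i]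
          by (auto simp: tl2_def with_ancilla_def Im_def)
      qed
    qed
  qed
qed


datatype zw = Z int int int int

fun ev :: "zw \<Rightarrow> complex" where
  "ev (Z a b c d) = Complex (of_int a + of_int (b - d) / sqrt 2) (of_int c + of_int (b + d) / sqrt 2)"
fun nx :: "zw \<Rightarrow> int" where "nx (Z a b c d) = a^2 + b^2 + c^2 + d^2"
fun ny :: "zw \<Rightarrow> int" where "ny (Z a b c d) = a*b + b*c + c*d - d*a"
fun zadd :: "zw \<Rightarrow> zw \<Rightarrow> zw" where "zadd (Z a b c d) (Z a' b' c' d') = Z (a+a') (b+b') (c+c') (d+d')"
fun zsub :: "zw \<Rightarrow> zw \<Rightarrow> zw" where "zsub (Z a b c d) (Z a' b' c' d') = Z (a-a') (b-b') (c-c') (d-d')"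
fun mulw :: "zw \<Rightarrow> zw" where "mulw (Z a b c d) = Z (-d) a b c"
fun div2 :: "zw \<Rightarrow> zw" where "div2 (Z a b c d) = Z ((b - d) div 2) ((a + c) div 2) ((b + d) div 2) ((c - a) div 2)"
fun dv2 :: "zw \<Rightarrow> bool" where "dv2 (Z a b c d) = (even (a - c) \<and> even (b - d))"
fun sumz :: "zw \<Rightarrow> int" where "sumz (Z a b c d) = a + b + c + d"
fun allsame :: "zw \<Rightarrow> bool" where "allsame (Z a b c d) = (even (a - b) \<and> even (b - c) \<and> even (c - d))"
fun alleven :: "zw \<Rightarrow> bool" where "alleven (Z a b c d) = (even a \<and> even b \<and> even c \<and> even d)"

lemma s2: "sqrt 2 * sqrt 2 = (2::real)" by simp

lemma w_complex: "w = Complex (1 / sqrt 2) (1 / sqrt 2)"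
proof -
  have "cis (pi/4) = Complex (sqrt 2 / 2) (sqrt 2 / 2)" by (simp add: cis.ctr cos_45 sin_45)
  thus ?thesis by (simp add: w_def real_div_sqrt)
qed

lemma ev_add: "ev (zadd u v) = ev u + ev v"
  by (cases u; cases v) (simp add: complex_eq_iff field_simps)
lemma ev_sub: "ev (zsub u v) = ev u - ev v"
  by (cases u; cases v) (simp add: complex_eq_iff field_simps)
lemma ev_mulw: "ev (mulw z) = w * ev z"
  by (cases z) (simp add: w_complex complex_eq_iff field_simps)
lemma ev_div2: "dv2 z \<Longrightarrow> ev z = rt * ev (div2 z)"
proof (cases z)
  case (Z a b c d)
  assume "dv2 z"
  then have e1: "even (a - c)" and e2: "even (b - d)" using Z by auto
  obtain p where p: "a - c = 2*p" using e1 by (rule evenE)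
  obtain q where q: "b - d = 2*q" using e2 by (rule evenE)
  from p q have pq: "a = c + 2*p" "b = d + 2*q" by auto
  have e: "div2 z = Z q (c + p) (d + q) (-p)" using Z pq by simp
  show ?thesis unfolding e using Z pq
    by (simp add: rt_def complex_eq_iff field_simps)
qed

lemma norm_ev: "(cmod (ev z))^2 = of_int (nx z) + sqrt 2 * of_int (ny z)"
  by (cases z) (simp only: cmod_power2 ev.simps complex.sel nx.simps ny.simps, simp add: field_simps power2_eq_square)

lemma nx_mulw[simp]: "nx (mulw z) = nx z" by (cases z) (simp add: algebra_simps)
lemma ny_mulw[simp]: "ny (mulw z) = ny z" by (cases z) (simp add: algebra_simps)
lemma nx_mulw_pow[simp]: "nx ((mulw ^^ l) z) = nx z" by (induction l) auto
lemma ny_mulw_pow[simp]: "ny ((mulw ^^ l) z) = ny z" by (induction l) auto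
lemma dv2_mulw: "dv2 (mulw z) = dv2 z" by (cases z) auto
lemma sumz_mulw: "even (sumz (mulw z)) = even (sumz z)" by (cases z) (auto simp: even_add)
lemma dv2_mulw_pow: "dv2 ((mulw ^^ l) z) = dv2 z" by (induction l) (auto simp: dv2_mulw)
lemma sumz_mulw_pow: "even (sumz ((mulw ^^ l) z)) = even (sumz z)" by (induction l) (auto simp: sumz_mulw)
lemma ev_mulw_pow: "ev ((mulw ^^ l) z) = w^l * ev z" by (induction l) (auto simp: ev_mulw)

lemma div2_eq: "dv2 z \<Longrightarrow> \<exists>p q c d. z = Z (c + 2*p) (d + 2*q) c d \<and> div2 z = Z q (c + p) (d + q) (-p)"
proof (cases z)
  case (Z a b c d)
  assume "dv2 z"
  then have e1: "even (a - c)" and e2: "even (b - d)" using Z by auto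
  obtain p where p: "a - c = 2*p" using e1 by (rule evenE)
  obtain q where q: "b - d = 2*q" using e2 by (rule evenE)
  from p q have pq: "a = c + 2*p" "b = d + 2*q" by auto
  show ?thesis using Z pq by (intro exI[of _ p] exI[of _ q] exI[of _ c] exI[of _ d]) simp
qed

lemma nx_div2: "dv2 z \<Longrightarrow> nx z = 2 * nx (div2 z)"
  by (drule div2_eq) (auto simp: power2_eq_square algebra_simps)
lemma ny_div2: "dv2 z \<Longrightarrow> ny z = 2 * ny (div2 z)"
  by (drule div2_eq) (auto simp: algebra_simps)

lemma nx_par: "nx (zadd u v) + nx (zsub u v) = 2 * (nx u + nx v)"
  by (cases u; cases v) (simp add: power2_eq_square algebra_simps)
lemma ny_par: "ny (zadd u v) + ny (zsub u v) = 2 * (ny u + ny v)"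
  by (cases u; cases v) (simp add: algebra_simps)

lemma odd_nx: "odd (nx z) = odd (sumz z)"
  by (cases z) (auto simp: power2_eq_square even_add even_mult_iff)

lemma odd_ny: "even (sumz z) \<Longrightarrow> odd (ny z) = (\<not> dv2 z)"
proof (cases z)
  case (Z a b c d)
  assume "even (sumz z)"
  then show ?thesis using Z by (auto simp: even_add even_mult_iff)
qed

lemma nx0: "nx z = 0 \<Longrightarrow> z = Z 0 0 0 0"
  by (cases z) (simp add: power2_eq_square add_nonneg_eq_0_iff)

lemma mulw_pows: "(mulw ^^ 0) (Z a b c d) = Z a b c d" "(mulw ^^ 1) (Z a b c d) = Z (-d) a b c"
  "(mulw ^^ 2) (Z a b c d) = Z (-c) (-d) a b" "(mulw ^^ 3) (Z a b c d) = Z (-b) (-c) (-d) a"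
  by (simp_all add: numeral_eq_Suc)

lemma ex4: "P 0 \<or> P 1 \<or> P 2 \<or> P 3 \<Longrightarrow> \<exists>l<(4::nat). P l"
proof (elim disjE)
  assume "P 0" thus ?thesis by (intro exI[of _ 0]) simp
next
  assume "P 1" thus ?thesis by (intro exI[of _ 1]) simp
next
  assume "P 2" thus ?thesis by (intro exI[of _ 2]) simp
next
  assume "P 3" thus ?thesis by (intro exI[of _ 3]) simp
qed

lemma P1raw: "odd ((a1::int)+b1+c1+d1) \<Longrightarrow> odd ((a2::int)+b2+c2+d2) \<Longrightarrow>
  (even (a1+a2 - (b1+b2)) \<and> even (b1+b2-(c1+c2)) \<and> even (c1+c2-(d1+d2))) \<or>
  (even (a1+ -d2 - (b1+a2)) \<and> even (b1+a2-(c1+b2)) \<and> even (c1+b2-(d1+c2))) \<or>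
  (even (a1+ -c2 - (b1+ -d2)) \<and> even (b1+ -d2-(c1+a2)) \<and> even (c1+a2-(d1+b2))) \<or>
  (even (a1+ -b2 - (b1+ -c2)) \<and> even (b1+ -c2-(c1+ -d2)) \<and> even (c1+ -d2-(d1+a2)))"
  by presburger

lemma P1: "odd (sumz z1) \<Longrightarrow> odd (sumz z2) \<Longrightarrow> \<exists>l<4. allsame (zadd z1 ((mulw ^^ l) z2))"
proof (cases z1; cases z2)
  fix a1 b1 c1 d1 a2 b2 c2 d2
  assume h: "odd (sumz z1)" "odd (sumz z2)" and z: "z1 = Z a1 b1 c1 d1" "z2 = Z a2 b2 c2 d2"
  have "allsame (zadd z1 ((mulw ^^ 0) z2)) \<or> allsame (zadd z1 ((mulw ^^ 1) z2)) \<or>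
         allsame (zadd z1 ((mulw ^^ 2) z2)) \<or> allsame (zadd z1 ((mulw ^^ 3) z2))"
    unfolding z mulw_pows zadd.simps allsame.simps
    by (rule P1raw) (use h z in auto)
  thus ?thesis by (rule ex4)
qed

lemma P2raw: "even ((a1::int)+b1+c1+d1) \<Longrightarrow> \<not>(even (a1-c1) \<and> even (b1-d1)) \<Longrightarrow>
  even ((a2::int)+b2+c2+d2) \<Longrightarrow> \<not>(even (a2-c2) \<and> even (b2-d2)) \<Longrightarrow>
  (even (a1+a2) \<and> even (b1+b2) \<and> even (c1+c2) \<and> even (d1+d2)) \<or>
  (even (a1+ -d2) \<and> even (b1+a2) \<and> even (c1+b2) \<and> even (d1+c2)) \<or>
  (even (a1+ -c2) \<and> even (b1+ -d2) \<and> even (c1+a2) \<and> even (d1+b2)) \<or>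
  (even (a1+ -b2) \<and> even (b1+ -c2) \<and> even (c1+ -d2) \<and> even (d1+a2))"
  by presburger

lemma P2: "even (sumz z1) \<Longrightarrow> \<not> dv2 z1 \<Longrightarrow> even (sumz z2) \<Longrightarrow> \<not> dv2 z2 \<Longrightarrow>
    \<exists>l<4. alleven (zadd z1 ((mulw ^^ l) z2))"
proof (cases z1; cases z2)
  fix a1 b1 c1 d1 a2 b2 c2 d2
  assume h: "even (sumz z1)" "\<not> dv2 z1" "even (sumz z2)" "\<not> dv2 z2" and z: "z1 = Z a1 b1 c1 d1" "z2 = Z a2 b2 c2 d2"
  have "alleven (zadd z1 ((mulw ^^ 0) z2)) \<or> alleven (zadd z1 ((mulw ^^ 1) z2)) \<or>
         alleven (zadd z1 ((mulw ^^ 2) z2)) \<or> alleven (zadd z1 ((mulw ^^ 3) z2))"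
    unfolding z mulw_pows zadd.simps alleven.simps
    by (rule P2raw) (use h z in auto)
  thus ?thesis by (rule ex4)
qed

lemma allsame_sub: "allsame (zadd u v) \<Longrightarrow> allsame (zsub u v)"
  by (cases u; cases v) (auto simp: even_add)
lemma alleven_sub: "alleven (zadd u v) \<Longrightarrow> alleven (zsub u v)"
  by (cases u; cases v) (auto simp: even_add)
lemma ev_tr: "even (x - y) \<Longrightarrow> even (y - z) \<Longrightarrow> even ((x::int) - z)"
  by presburger
lemma ev_h0: "even (c + 2*p - (d + 2*q)) \<Longrightarrow> even ((c::int) - d)" by presburger
lemma ev_h1: "even ((c::int) - d) \<Longrightarrow> even (q + (c + p) + (d + q) + - p)" by presburger
lemma ev_h2: "even (d::int) \<Longrightarrow> even (q - (d + q))" by presburger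
lemma ev_h3: "even (c::int) \<Longrightarrow> even (c + p - - p)" by presburger

lemma allsame_imp: "allsame s \<Longrightarrow> dv2 s \<and> even (sumz (div2 s))"
proof (cases s)
  case (Z a b c d)
  assume h: "allsame s"
  hence "even (a - b)" "even (b - c)" "even (c - d)" using Z by auto
  hence "even (a - c)" "even (b - d)" using ev_tr by blast+
  hence "dv2 s" using Z by simp
  then obtain p q c d where e: "s = Z (c + 2*p) (d + 2*q) c d" "div2 s = Z q (c + p) (d + q) (-p)"
    using div2_eq by blast
  have "even (c + 2*p - (d + 2*q))" using h unfolding e(1) allsame.simps by blast
  hence "even (c - d)" by (rule ev_h0)
  hence "even (q + (c + p) + (d + q) + - p)" by (rule ev_h1)
  hence "even (sumz (div2 s))" unfolding e(2) by (simp only: sumz.simps)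
  thus ?thesis using \<open>dv2 s\<close> by simp
qed
lemma alleven_imp: "alleven s \<Longrightarrow> dv2 s \<and> dv2 (div2 s)"
proof (cases s)
  case (Z a b c d)
  assume h: "alleven s"
  hence "even a" "even b" "even c" "even d" using Z by auto
  hence "even (a - c)" "even (b - d)" by auto
  hence "dv2 s" using Z by simp
  then obtain p q c d where e: "s = Z (c + 2*p) (d + 2*q) c d" "div2 s = Z q (c + p) (d + q) (-p)"
    using div2_eq by blast
  have "even c" "even d" using h unfolding e(1) alleven.simps by blast+
  hence "even (q - (d + q))" "even (c + p - - p)" using ev_h2 ev_h3 by blast+
  hence "dv2 (div2 s)" unfolding e(2) by (simp only: dv2.simps)
  thus ?thesis using \<open>dv2 s\<close> by simp
qed
lemma dv2_even: "dv2 z \<Longrightarrow> even (sumz z)"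
  by (cases z) (auto simp: even_add)


datatype prim = P2 kind nat nat | P1 nat

fun aprim :: "prim \<Rightarrow> (nat \<Rightarrow> complex) \<Rightarrow> (nat \<Rightarrow> complex)" where
  "aprim (P2 k x y) v = tl2 (kmat k) x y v"
| "aprim (P1 y) v = (\<lambda>i. if i = y then w * v i else v i)"

definition apl :: "prim list \<Rightarrow> (nat \<Rightarrow> complex) \<Rightarrow> (nat \<Rightarrow> complex)" where
  "apl ps v = fold aprim ps v"

lemma apl_Nil[simp]: "apl [] v = v" by (simp add: apl_def)
lemma apl_Cons[simp]: "apl (p # ps) v = apl ps (aprim p v)" by (simp add: apl_def)
lemma apl_append[simp]: "apl (ps @ qs) v = apl qs (apl ps v)" by (simp add: apl_def)

fun valid :: "nat \<Rightarrow> prim \<Rightarrow> bool" where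
  "valid n (P2 k x y) = (x < 2^n \<and> y < 2^n \<and> x \<noteq> y)"
| "valid n (P1 y) = (n = 1 \<and> y < 2)"

definition st :: "nat \<Rightarrow> (nat \<Rightarrow> zw) \<Rightarrow> nat \<Rightarrow> (nat \<Rightarrow> complex)" where
  "st n z k = (\<lambda>i. if i < 2^n then ev (z i) / rt^k else 0)"

lemma rt_pow_nz[simp]: "rt^k \<noteq> 0" by simp

lemma tr_H:
  assumes "x < 2^n" "y < 2^n" "x \<noteq> y" "dv2 (zadd (z x) (z y))" "dv2 (zsub (z x) (z y))"
  shows "aprim (P2 KH x y) (st n z k) =
    st n (z(x := div2 (zadd (z x) (z y)), y := div2 (zsub (z x) (z y)))) k"
proof
  fix i
  have ex: "ev (z x) + ev (z y) = rt * ev (div2 (zadd (z x) (z y)))"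
    using ev_div2[OF assms(4)] by (simp add: ev_add)
  have ey: "ev (z x) - ev (z y) = rt * ev (div2 (zsub (z x) (z y)))"
    using ev_div2[OF assms(5)] by (simp add: ev_sub)
  show "aprim (P2 KH x y) (st n z k) i = st n (z(x := div2 (zadd (z x) (z y)), y := div2 (zsub (z x) (z y)))) k i"
    using assms ex ey
    by (auto simp: tl2_def st_def hadamard_rt field_simps)
qed

lemma tr_D:
  assumes "x < 2^n" "y < 2^n" "x \<noteq> y"
  shows "aprim (P2 KD x y) (st n z k) = st n (z(x := mulw (z x), y := (mulw ^^ 7) (z y))) k"
  using assms by (auto simp: tl2_def st_def dgm_def ev_mulw ev_mulw_pow fun_eq_iff)

lemma tr_1:
  assumes "y < 2^n"
  shows "aprim (P1 y) (st n z k) = st n (z(y := mulw (z y))) k"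
  using assms by (auto simp: st_def ev_mulw fun_eq_iff)

lemma tr_drop:
  assumes "\<forall>i<2^n. dv2 (z i)"
  shows "st n z (Suc k) = st n (\<lambda>i. div2 (z i)) k"
  using assms by (auto simp: st_def fun_eq_iff ev_div2[symmetric] field_simps)

definition invz :: "nat \<Rightarrow> (nat \<Rightarrow> zw) \<Rightarrow> nat \<Rightarrow> bool" where
  "invz n z k = ((\<Sum>i<2^n. nx (z i)) = 2^k \<and> (\<Sum>i<2^n. ny (z i)) = 0)"

lemma delta_lt: "x < (N::nat) \<Longrightarrow> (\<Sum>i<N. if i = x then c else 0) = (c::int)"
proof (induction N)
  case (Suc N)
  then show ?case
  proof (cases "x = N")
    case True
    have "(\<Sum>i<N. if i = x then c else 0) = 0" using True by (intro sum.neutral) auto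
    then show ?thesis using True by simp
  qed simp
qed simp

lemma sum_upd2:
  fixes g :: "zw \<Rightarrow> int"
  assumes "x < (N::nat)" "y < N" "x \<noteq> y"
  shows "(\<Sum>i<N. g ((z(x := a, y := b)) i)) = (\<Sum>i<N. g (z i)) - g (z x) - g (z y) + g a + g b"
proof -
  have feq: "(\<lambda>i. g ((z(x := a, y := b)) i)) = (\<lambda>i. g (z i) + ((if i = x then g a - g (z x) else 0) + (if i = y then g b - g (z y) else 0)))"
    using assms by (auto simp: fun_eq_iff)
  have "(\<Sum>i<N. g ((z(x := a, y := b)) i)) = (\<Sum>i<N. g (z i)) + ((\<Sum>i<N. if i = x then g a - g (z x) else 0) + (\<Sum>i<N. if i = y then g b - g (z y) else 0))"
    unfolding feq by (simp only: sum.distrib)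
  also have "\<dots> = (\<Sum>i<N. g (z i)) - g (z x) - g (z y) + g a + g b"
    using assms by (simp add: delta_lt)
  finally show ?thesis .
qed

lemma mulw_pow_add: "(mulw ^^ m) ((mulw ^^ l) z) = (mulw ^^ (m + l)) z"
  by (simp add: funpow_add)

lemma phase:
  assumes n1: "n \<ge> 1" and x: "x1 < 2^n" "x2 < 2^n" "x1 \<noteq> x2"
  shows "\<exists>ps z'. (\<forall>p\<in>set ps. valid n p) \<and> length ps = l \<and> apl ps (st n z k) = st n z' k \<and>
    z' x1 = z x1 \<and> z' x2 = (mulw ^^ l) (z x2) \<and> (\<forall>i. \<exists>m. z' i = (mulw ^^ m) (z i))"
proof (induction l)
  case 0
  show ?case by (intro exI[of _ "[]"] exI[of _ z]) (auto intro: exI[of _ 0])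
next
  case (Suc l)
  then obtain ps z' where h: "\<forall>p\<in>set ps. valid n p" "length ps = l" "apl ps (st n z k) = st n z' k"
    "z' x1 = z x1" "z' x2 = (mulw ^^ l) (z x2)" "\<forall>i. \<exists>m. z' i = (mulw ^^ m) (z i)" by blast
  show ?case
  proof (cases "n = 1")
    case True
    let ?z = "z'(x2 := mulw (z' x2))"
    have v: "valid n (P1 x2)" using True x by simp
    have "apl (ps @ [P1 x2]) (st n z k) = st n ?z k" using h(3) tr_1[OF x(2)] by simp
    moreover have "\<forall>i. \<exists>m. ?z i = (mulw ^^ m) (z i)"
    proof
      fix i
      obtain m where "z' i = (mulw ^^ m) (z i)" using h(6) by blast
      thus "\<exists>m. ?z i = (mulw ^^ m) (z i)"
      proof (cases "i = x2")
        case True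
        then show ?thesis using \<open>z' i = _\<close> by (intro exI[of _ "Suc m"]) simp
      next
        case False
        then show ?thesis using \<open>z' i = _\<close> by (intro exI[of _ m]) simp
      qed
    qed
    ultimately show ?thesis using h v x
      by (intro exI[of _ "ps @ [P1 x2]"] exI[of _ ?z]) (auto simp del: fun_upd_apply, auto)
  next
    case False
    hence n2: "n \<ge> 2" using n1 by simp
    have "(4::nat) \<le> 2^n" using n2 by (metis power_increasing one_le_numeral power2_eq_square numeral_Bit0 mult_2)
    then obtain u where u: "u < 2^n" "u \<noteq> x1" "u \<noteq> x2"
    proof -
      assume r: "\<And>u. u < 2^n \<Longrightarrow> u \<noteq> x1 \<Longrightarrow> u \<noteq> x2 \<Longrightarrow> thesis"
      have "\<exists>u\<in>{0,1,2::nat}. u \<noteq> x1 \<and> u \<noteq> x2" by auto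
      then obtain u where "u \<in> {0,1,2::nat}" "u \<noteq> x1" "u \<noteq> x2" by blast
      moreover have "u < 2^n" using \<open>u \<in> _\<close> \<open>4 \<le> 2^n\<close> by auto
      ultimately show thesis using r by blast
    qed
    let ?z = "z'(x2 := mulw (z' x2), u := (mulw ^^ 7) (z' u))"
    have v: "valid n (P2 KD x2 u)" using u x by simp
    have "apl (ps @ [P2 KD x2 u]) (st n z k) = st n ?z k" using h(3) tr_D[OF x(2) u(1)] u by simp
    moreover have "\<forall>i. \<exists>m. ?z i = (mulw ^^ m) (z i)"
    proof
      fix i
      obtain m where "z' i = (mulw ^^ m) (z i)" using h(6) by blast
      thus "\<exists>m. ?z i = (mulw ^^ m) (z i)"
      proof (cases "i = x2")
        case True
        then show ?thesis using \<open>z' i = _\<close> u by (intro exI[of _ "Suc m"]) simp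
      next
        case False
        show ?thesis
        proof (cases "i = u")
          case True
          then show ?thesis using \<open>z' i = _\<close> u by (intro exI[of _ "7 + m"]) (simp add: mulw_pow_add)
        next
          case False
          then show ?thesis using \<open>z' i = _\<close> \<open>i \<noteq> x2\<close> by (intro exI[of _ m]) simp
        qed
      qed
    qed
    ultimately show ?thesis using h v x u
      by (intro exI[of _ "ps @ [P2 KD x2 u]"] exI[of _ ?z]) (auto simp del: fun_upd_apply, auto)
  qed
qed

lemma inv_mulw:
  assumes "\<forall>i. \<exists>m. z' i = (mulw ^^ m) (z i)"
  shows "invz n z' k = invz n z k"
proof -
  have "nx (z' i) = nx (z i)" "ny (z' i) = ny (z i)" for i using assms by (metis nx_mulw_pow ny_mulw_pow)+
  thus ?thesis unfolding invz_def by simp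
qed

lemma card_even_ge2:
  assumes "finite A" "even (card A)" "A \<noteq> {}"
  obtains x1 x2 where "x1 \<in> A" "x2 \<in> A" "x1 \<noteq> x2"
proof -
  have "card A \<noteq> 0" using assms by auto
  hence "card A \<ge> 2" using assms(2) by presburger
  then obtain x1 x2 where "x1 \<in> A" "x2 \<in> A" "x1 \<noteq> x2"
    by (metis card_2_iff' card_le_Suc_iff numeral_2_eq_2 obtain_subset_with_card_n subset_iff)
  thus ?thesis using that by blast
qed

lemma H_step_sums:
  assumes "dv2 s" "dv2 d" "s = zadd u v" "d = zsub u v"
  shows "nx (div2 s) + nx (div2 d) = nx u + nx v \<and> ny (div2 s) + ny (div2 d) = ny u + ny v"
proof
  have "nx s + nx d = 2 * (nx u + nx v)" using nx_par assms(3,4) by simp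
  thus "nx (div2 s) + nx (div2 d) = nx u + nx v"
    using nx_div2[OF assms(1)] nx_div2[OF assms(2)] by presburger
  have "ny s + ny d = 2 * (ny u + ny v)" using ny_par assms(3,4) by simp
  thus "ny (div2 s) + ny (div2 d) = ny u + ny v"
    using ny_div2[OF assms(1)] ny_div2[OF assms(2)] by presburger
qed

lemma stage1:
  assumes n1: "n \<ge> 1" and k1: "k \<ge> 1"
  shows "invz n z k \<Longrightarrow> \<exists>ps z'. (\<forall>p\<in>set ps. valid n p) \<and>
     length ps \<le> 2 * card {i. i < 2^n \<and> odd (sumz (z i))} \<and>
     apl ps (st n z k) = st n z' k \<and> invz n z' k \<and> (\<forall>i<2^n. even (sumz (z' i)))"
proof (induction "card {i. i < 2^n \<and> odd (sumz (z i))}" arbitrary: z rule: less_induct)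
  case less
  define Od where "Od = {i. i < 2^n \<and> odd (sumz (z i))}"
  have fin: "finite Od" unfolding Od_def by simp
  show ?case
  proof (cases "Od = {}")
    case True
    then show ?thesis using less.prems unfolding Od_def
      by (intro exI[of _ "[]"] exI[of _ z]) auto
  next
    case False
    have "even ((\<Sum>i<2^n. nx (z i)))" using less.prems k1 unfolding invz_def
      by (simp add: dvd_power)
    hence "even (card {i \<in> {..<2^n}. odd (nx (z i))})" by (simp add: even_sum_iff)
    moreover have "{i \<in> {..<2^n}. odd (nx (z i))} = Od" by (auto simp: Od_def odd_nx)
    ultimately have "even (card Od)" by simp
    then obtain x1 x2 where xs: "x1 \<in> Od" "x2 \<in> Od" "x1 \<noteq> x2" using card_even_ge2 fin False by blast
    have x12: "x1 < 2^n" "x2 < 2^n" "odd (sumz (z x1))" "odd (sumz (z x2))" using xs by (auto simp: Od_def)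
    obtain l where l: "l < 4" "allsame (zadd (z x1) ((mulw ^^ l) (z x2)))" using P1[OF x12(3,4)] by blast
    obtain ps1 z1 where p1: "\<forall>p\<in>set ps1. valid n p" "length ps1 = l" "apl ps1 (st n z k) = st n z1 k"
      "z1 x1 = z x1" "z1 x2 = (mulw ^^ l) (z x2)" "\<forall>i. \<exists>m. z1 i = (mulw ^^ m) (z i)"
      using phase[OF n1 x12(1,2) xs(3)] by blast
    define s where "s = zadd (z1 x1) (z1 x2)"
    define d where "d = zsub (z1 x1) (z1 x2)"
    have as: "allsame s" using l p1 by (simp add: s_def)
    have ad: "allsame d" using allsame_sub[OF as[unfolded s_def]] by (simp add: d_def)
    have ds: "dv2 s" "even (sumz (div2 s))" using allsame_imp[OF as] by auto
    have dd: "dv2 d" "even (sumz (div2 d))" using allsame_imp[OF ad] by auto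
    define z2 where "z2 = z1(x1 := div2 s, x2 := div2 d)"
    have ap2: "apl (ps1 @ [P2 KH x1 x2]) (st n z k) = st n z2 k"
      using p1(3) tr_H[OF x12(1,2) xs(3), of z1 k] ds dd by (simp add: z2_def s_def d_def)
    have inv1: "invz n z1 k" using inv_mulw[OF p1(6)] less.prems by simp
    have inv2: "invz n z2 k"
    proof -
      have "(\<Sum>i<2^n. nx (z2 i)) = (\<Sum>i<2^n. nx (z1 i))"
        unfolding z2_def using sum_upd2[OF x12(1,2) xs(3), of nx z1] H_step_sums[OF ds(1) dd(1) s_def d_def] by simp
      moreover have "(\<Sum>i<2^n. ny (z2 i)) = (\<Sum>i<2^n. ny (z1 i))"
        unfolding z2_def using sum_upd2[OF x12(1,2) xs(3), of ny z1] H_step_sums[OF ds(1) dd(1) s_def d_def] by simp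
      ultimately show ?thesis using inv1 unfolding invz_def by simp
    qed
    have par: "even (sumz (z1 i)) = even (sumz (z i))" for i
      using p1(6) sumz_mulw_pow by metis
    have Od2: "{i. i < 2^n \<and> odd (sumz (z2 i))} = Od - {x1, x2}"
      using ds(2) dd(2) xs(3) par by (auto simp: z2_def Od_def)
    have c2: "card Od - 2 = card (Od - {x1, x2})" using xs fin by (simp add: card_Diff_subset)
    have "card {x1, x2} \<le> card Od" using xs fin by (intro card_mono) auto
    hence cge: "card Od \<ge> 2" using xs(3) by simp
    have lt: "card {i. i < 2^n \<and> odd (sumz (z2 i))} < card {i. i < 2^n \<and> odd (sumz (z i))}"
      unfolding Od2 Od_def[symmetric] c2[symmetric] using cge by linarith
    obtain ps2 z' where p2: "\<forall>p\<in>set ps2. valid n p" "length ps2 \<le> 2 * card {i. i < 2^n \<and> odd (sumz (z2 i))}"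
      "apl ps2 (st n z2 k) = st n z' k" "invz n z' k" "\<forall>i<2^n. even (sumz (z' i))"
      using less.hyps[OF lt inv2] by blast
    have vH: "valid n (P2 KH x1 x2)" using x12 xs by simp
    have "length (ps1 @ [P2 KH x1 x2] @ ps2) \<le> 2 * card Od"
      using p1(2) l(1) p2(2) unfolding Od2 c2[symmetric] using cge by simp
    thus ?thesis using p1(1) vH p2 ap2 unfolding Od_def
      by (intro exI[of _ "ps1 @ [P2 KH x1 x2] @ ps2"] exI[of _ z']) auto
  qed
qed

lemma stage2:
  assumes n1: "n \<ge> 1"
  shows "invz n z k \<Longrightarrow> (\<forall>i<2^n. even (sumz (z i))) \<Longrightarrow> \<exists>ps z'. (\<forall>p\<in>set ps. valid n p) \<and>
     length ps \<le> 2 * card {i. i < 2^n \<and> \<not> dv2 (z i)} \<and>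
     apl ps (st n z k) = st n z' k \<and> invz n z' k \<and> (\<forall>i<2^n. dv2 (z' i))"
proof (induction "card {i. i < 2^n \<and> \<not> dv2 (z i)}" arbitrary: z rule: less_induct)
  case less
  define Od where "Od = {i. i < 2^n \<and> \<not> dv2 (z i)}"
  have fin: "finite Od" unfolding Od_def by simp
  show ?case
  proof (cases "Od = {}")
    case True
    then show ?thesis using less.prems unfolding Od_def
      by (intro exI[of _ "[]"] exI[of _ z]) auto
  next
    case False
    have "even ((\<Sum>i<2^n. ny (z i)))" using less.prems unfolding invz_def by simp
    hence "even (card {i \<in> {..<2^n}. odd (ny (z i))})" by (simp add: even_sum_iff)
    moreover have "{i \<in> {..<2^n}. odd (ny (z i))} = Od"
    proof -
      have "i < 2^n \<Longrightarrow> odd (ny (z i)) = (\<not> dv2 (z i))" for i using less.prems(2) odd_ny by blast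
      thus ?thesis by (auto simp: Od_def)
    qed
    ultimately have "even (card Od)" by simp
    then obtain x1 x2 where xs: "x1 \<in> Od" "x2 \<in> Od" "x1 \<noteq> x2" using card_even_ge2 fin False by blast
    have x12: "x1 < 2^n" "x2 < 2^n" "\<not> dv2 (z x1)" "\<not> dv2 (z x2)" "even (sumz (z x1))" "even (sumz (z x2))"
      using xs less.prems(2) by (auto simp: Od_def)
    obtain l where l: "l < 4" "alleven (zadd (z x1) ((mulw ^^ l) (z x2)))"
      using P2[OF x12(5,3,6,4)] by blast
    obtain ps1 z1 where p1: "\<forall>p\<in>set ps1. valid n p" "length ps1 = l" "apl ps1 (st n z k) = st n z1 k"
      "z1 x1 = z x1" "z1 x2 = (mulw ^^ l) (z x2)" "\<forall>i. \<exists>m. z1 i = (mulw ^^ m) (z i)"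
      using phase[OF n1 x12(1,2) xs(3)] by blast
    define s where "s = zadd (z1 x1) (z1 x2)"
    define d where "d = zsub (z1 x1) (z1 x2)"
    have as: "alleven s" using l p1 by (simp add: s_def)
    have ad: "alleven d" using alleven_sub[OF as[unfolded s_def]] by (simp add: d_def)
    have ds: "dv2 s" "dv2 (div2 s)" using alleven_imp[OF as] by auto
    have dd: "dv2 d" "dv2 (div2 d)" using alleven_imp[OF ad] by auto
    define z2 where "z2 = z1(x1 := div2 s, x2 := div2 d)"
    have ap2: "apl (ps1 @ [P2 KH x1 x2]) (st n z k) = st n z2 k"
      using p1(3) tr_H[OF x12(1,2) xs(3), of z1 k] ds dd by (simp add: z2_def s_def d_def)
    have inv1: "invz n z1 k" using inv_mulw[OF p1(6)] less.prems by simp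
    have inv2: "invz n z2 k"
    proof -
      have hs: "nx (div2 s) + nx (div2 d) = nx (z1 x1) + nx (z1 x2) \<and> ny (div2 s) + ny (div2 d) = ny (z1 x1) + ny (z1 x2)"
        by (rule H_step_sums[OF ds(1) dd(1) s_def d_def])
      have "(\<Sum>i<2^n. nx (z2 i)) = (\<Sum>i<2^n. nx (z1 i))"
        unfolding z2_def using sum_upd2[OF x12(1,2) xs(3), of nx z1] hs by simp
      moreover have "(\<Sum>i<2^n. ny (z2 i)) = (\<Sum>i<2^n. ny (z1 i))"
        unfolding z2_def using sum_upd2[OF x12(1,2) xs(3), of ny z1] hs by simp
      ultimately show ?thesis using inv1 unfolding invz_def by simp
    qed
    have par: "dv2 (z1 i) = dv2 (z i)" "even (sumz (z1 i)) = even (sumz (z i))" for i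
      using p1(6) dv2_mulw_pow sumz_mulw_pow by metis+
    have ev2: "\<forall>i<2^n. even (sumz (z2 i))"
      using less.prems(2) par dv2_even[OF ds(2)] dv2_even[OF dd(2)] by (auto simp: z2_def)
    have Od2: "{i. i < 2^n \<and> \<not> dv2 (z2 i)} = Od - {x1, x2}"
      using ds(2) dd(2) xs(3) par by (auto simp: z2_def Od_def)
    have c2: "card Od - 2 = card (Od - {x1, x2})" using xs fin by (simp add: card_Diff_subset)
    have "card {x1, x2} \<le> card Od" using xs fin by (intro card_mono) auto
    hence cge: "card Od \<ge> 2" using xs(3) by simp
    have lt: "card {i. i < 2^n \<and> \<not> dv2 (z2 i)} < card {i. i < 2^n \<and> \<not> dv2 (z i)}"
      unfolding Od2 Od_def[symmetric] c2[symmetric] using cge by linarith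
    obtain ps2 z' where p2: "\<forall>p\<in>set ps2. valid n p" "length ps2 \<le> 2 * card {i. i < 2^n \<and> \<not> dv2 (z2 i)}"
      "apl ps2 (st n z2 k) = st n z' k" "invz n z' k" "\<forall>i<2^n. dv2 (z' i)"
      using less.hyps[OF lt inv2 ev2] by blast
    have vH: "valid n (P2 KH x1 x2)" using x12 xs by simp
    have "length (ps1 @ [P2 KH x1 x2] @ ps2) \<le> 2 * card Od"
      using p1(2) l(1) p2(2) unfolding Od2 c2[symmetric] using cge by simp
    thus ?thesis using p1(1) vH p2 ap2 unfolding Od_def
      by (intro exI[of _ "ps1 @ [P2 KH x1 x2] @ ps2"] exI[of _ z']) auto
  qed
qed

lemma card_lt_pow: "card {i. i < (2::nat)^n \<and> P i} \<le> 2^n"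
proof -
  have "card {i. i < (2::nat)^n \<and> P i} \<le> card {..<(2::nat)^n}" by (intro card_mono) auto
  thus ?thesis by simp
qed

lemma level:
  assumes n1: "n \<ge> 1" and iv: "invz n z (Suc k)"
  shows "\<exists>ps z'. (\<forall>p\<in>set ps. valid n p) \<and> length ps \<le> 4 * 2^n \<and>
     apl ps (st n z (Suc k)) = st n z' k \<and> invz n z' k"
proof -
  obtain ps1 z1 where p1: "\<forall>p\<in>set ps1. valid n p" "length ps1 \<le> 2 * card {i. i < 2^n \<and> odd (sumz (z i))}"
     "apl ps1 (st n z (Suc k)) = st n z1 (Suc k)" "invz n z1 (Suc k)" "\<forall>i<2^n. even (sumz (z1 i))"
    using stage1[OF n1 _ iv] by auto
  obtain ps2 z2 where p2: "\<forall>p\<in>set ps2. valid n p" "length ps2 \<le> 2 * card {i. i < 2^n \<and> \<not> dv2 (z1 i)}"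
     "apl ps2 (st n z1 (Suc k)) = st n z2 (Suc k)" "invz n z2 (Suc k)" "\<forall>i<2^n. dv2 (z2 i)"
    using stage2[OF n1 p1(4,5)] by blast
  define z' where "z' i = div2 (z2 i)" for i
  have e: "st n z2 (Suc k) = st n z' k"
    unfolding z'_def by (rule tr_drop) (use p2(5) in auto)
  have "invz n z' k"
  proof -
    have "(\<Sum>i<2^n. nx (z2 i)) = 2 * (\<Sum>i<2^n. nx (z' i))"
      unfolding sum_distrib_left z'_def using p2(5) nx_div2 by (intro sum.cong) auto
    moreover have "(\<Sum>i<2^n. ny (z2 i)) = 2 * (\<Sum>i<2^n. ny (z' i))"
      unfolding sum_distrib_left z'_def using p2(5) ny_div2 by (intro sum.cong) auto
    ultimately show ?thesis using p2(4) unfolding invz_def by simp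
  qed
  moreover have "length (ps1 @ ps2) \<le> 4 * 2^n"
    using p1(2) p2(2) card_lt_pow[of n "\<lambda>i. odd (sumz (z i))"] card_lt_pow[of n "\<lambda>i. \<not> dv2 (z1 i)"] by simp
  ultimately show ?thesis using p1 p2 e
    by (intro exI[of _ "ps1 @ ps2"] exI[of _ z']) auto
qed

lemma reduce:
  assumes n1: "n \<ge> 1"
  shows "invz n z k \<Longrightarrow> \<exists>ps z'. (\<forall>p\<in>set ps. valid n p) \<and> length ps \<le> 4 * 2^n * k \<and>
     apl ps (st n z k) = st n z' 0 \<and> invz n z' 0"
proof (induction k arbitrary: z)
  case 0
  then show ?case by (intro exI[of _ "[]"] exI[of _ z]) auto
next
  case (Suc k)
  obtain ps1 z1 where p1: "\<forall>p\<in>set ps1. valid n p" "length ps1 \<le> 4 * 2^n"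
     "apl ps1 (st n z (Suc k)) = st n z1 k" "invz n z1 k" using level[OF n1 Suc.prems] by blast
  obtain ps2 z2 where p2: "\<forall>p\<in>set ps2. valid n p" "length ps2 \<le> 4 * 2^n * k"
     "apl ps2 (st n z1 k) = st n z2 0" "invz n z2 0" using Suc.IH[OF p1(4)] by blast
  show ?case using p1 p2
    by (intro exI[of _ "ps1 @ ps2"] exI[of _ z2]) auto
qed


lemma aprim_lin: "aprim p (\<lambda>i. a * u i + b * v i) = (\<lambda>i. a * aprim p u i + b * aprim p v i)"
  by (cases p) (auto simp: tl2_def fun_eq_iff algebra_simps)

lemma apl_lin: "apl ps (\<lambda>i. a * u i + b * v i) = (\<lambda>i. a * apl ps u i + b * apl ps v i)"
proof (induction ps arbitrary: u v)
  case Nil then show ?case by simp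
next
  case (Cons p ps) then show ?case by (simp add: aprim_lin)
qed

definition unit2 :: "mat2 \<Rightarrow> bool" where
  "unit2 M = (cnj (M False False) * M False False + cnj (M True False) * M True False = 1 \<and>
              cnj (M False True) * M False True + cnj (M True True) * M True True = 1 \<and>
              cnj (M False False) * M False True + cnj (M True False) * M True True = 0 \<and>
              cnj (M False True) * M False False + cnj (M True True) * M True False = 0)"

lemma sum_split2:
  fixes f :: "nat \<Rightarrow> complex"
  assumes "x < N" "y < N" "x \<noteq> y"
  shows "(\<Sum>i<N. f i) = f x + f y + (\<Sum>i\<in>{..<N} - {x, y}. f i)"
proof -
  have "(\<Sum>i<N. f i) = f x + (\<Sum>i\<in>{..<N} - {x}. f i)" using assms by (simp add: sum.remove)
  also have "(\<Sum>i\<in>{..<N} - {x}. f i) = f y + (\<Sum>i\<in>{..<N} - {x} - {y}. f i)"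
    using assms by (intro sum.remove) auto
  finally show ?thesis by (simp add: Diff_insert2[symmetric] insert_commute)
qed

lemma tl2_inner:
  assumes "unit2 M" "x < 2^n" "y < 2^n" "x \<noteq> y"
  shows "inner n (tl2 M x y u) (tl2 M x y v) = inner n u v"
proof -
  have o: "(\<Sum>i\<in>{..<2^n} - {x, y}. cnj (tl2 M x y u i) * tl2 M x y v i) = (\<Sum>i\<in>{..<2^n} - {x, y}. cnj (u i) * v i)"
    by (intro sum.cong) (auto simp: tl2_def)
  have "cnj (tl2 M x y u x) * tl2 M x y v x + cnj (tl2 M x y u y) * tl2 M x y v y = cnj (u x) * v x + cnj (u y) * v y"
  proof -
    have "cnj (tl2 M x y u x) * tl2 M x y v x + cnj (tl2 M x y u y) * tl2 M x y v y =
      cnj (u x) * v x * (cnj (M False False) * M False False + cnj (M True False) * M True False)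
      + cnj (u y) * v y * (cnj (M False True) * M False True + cnj (M True True) * M True True)
      + cnj (u x) * v y * (cnj (M False False) * M False True + cnj (M True False) * M True True)
      + cnj (u y) * v x * (cnj (M False True) * M False False + cnj (M True True) * M True False)"
      using assms by (simp add: tl2_def algebra_simps)
    thus ?thesis using assms(1) unfolding unit2_def by simp
  qed
  thus ?thesis unfolding inner_def using sum_split2[OF assms(2-4)] o by simp
qed

lemma cnj_w: "cnj w * w = 1"
proof -
  have "w * cnj w = complex_of_real ((cmod w)^2)" by (rule complex_norm_square[symmetric])
  moreover have "cmod w = 1" by (simp add: w_def)
  ultimately show ?thesis by (simp add: mult.commute)
qed

lemma cnj_w7: "cnj w ^ 7 * w^7 = 1"
  by (metis cnj_w power_mult_distrib power_one)
lemma cnj_w': "w * cnj w = 1" using cnj_w by (simp add: mult.commute)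

lemma cnj_rt: "cnj rt = rt" by (simp add: rt_def)

lemma kmat_unit: "unit2 (kmat k)"
proof (cases k)
  case KH
  have "cnj (1/rt) * (1/rt) = 1/2" using rt_sq by (simp add: cnj_rt field_simps)
  then show ?thesis using KH rt_sq by (simp add: unit2_def hadamard_rt cnj_rt field_simps)
qed (auto simp: unit2_def dgm_def cnj_w cnj_w7)

fun valid2 :: "nat \<Rightarrow> prim \<Rightarrow> bool" where
  "valid2 n p = valid n p"

lemma aprim_inner: "valid n p \<Longrightarrow> inner n (aprim p u) (aprim p v) = inner n u v"
proof (cases p)
  case (P2 k x y)
  assume "valid n p"
  then show ?thesis using P2 tl2_inner[OF kmat_unit] by simp
next
  case (P1 y)
  assume "valid n p"
  hence y: "n = 1" "y < 2" using P1 by auto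
  have "inner n (aprim p u) (aprim p v) = (\<Sum>i<2. cnj (if i = y then w * u i else u i) * (if i = y then w * v i else v i))"
    using P1 y by (simp add: inner_def)
  also have "\<dots> = (\<Sum>i<2. cnj (u i) * v i)"
    by (intro sum.cong) (auto simp: cnj_w cnj_w' algebra_simps)
  also have "\<dots> = inner n u v" using y by (simp add: inner_def)
  finally show ?thesis .
qed

lemma apl_inner: "(\<forall>p\<in>set ps. valid n p) \<Longrightarrow> inner n (apl ps u) (apl ps v) = inner n u v"
  by (induction ps arbitrary: u v) (auto simp: aprim_inner)

fun invp :: "prim \<Rightarrow> prim list" where
  "invp (P2 KH x y) = [P2 KH x y]" | "invp (P2 KD x y) = [P2 KDi x y]"
| "invp (P2 KDi x y) = [P2 KD x y]" | "invp (P2 KZ x y) = [P2 KZ x y]"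
| "invp (P1 y) = replicate 7 (P1 y)"

definition invl :: "prim list \<Rightarrow> prim list" where "invl ps = concat (map invp (rev ps))"

lemma tl2_comp: "x \<noteq> y \<Longrightarrow> tl2 N x y (tl2 M x y v) = tl2 (mm N M) x y v"
  by (auto simp: tl2_def mm_def fun_eq_iff algebra_simps)

lemma tl2_Im: "tl2 Im x y v = v" by (auto simp: tl2_def Im_def fun_eq_iff)

lemma apl_P1s: "apl (replicate m (P1 y)) u = (\<lambda>i. if i = y then w^m * u i else u i)"
  by (induction m arbitrary: u) (auto simp: fun_eq_iff algebra_simps)

lemma invp_correct: "valid n p \<Longrightarrow> apl (invp p) (aprim p v) = v"
proof (cases p)
  case (P2 k x y)
  assume "valid n p"
  hence xy: "x \<noteq> y" using P2 by simp
  have hh: "mm hadamard hadamard = Im"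
    by (auto simp: fun_eq_iff mm_def Im_def hadamard_rt field_simps rt_sq)
  show ?thesis using P2 xy
    by (cases k) (simp_all add: tl2_comp tl2_Im hh mm_dgm ww7 Im_dgm[symmetric])
next
  case (P1 y)
  then show ?thesis by (auto simp: apl_P1s fun_eq_iff mult.assoc[symmetric] ww7)
qed

lemma invl_correct: "(\<forall>p\<in>set ps. valid n p) \<Longrightarrow> apl (invl ps) (apl ps v) = v"
proof (induction ps arbitrary: v)
  case Nil then show ?case by (simp add: invl_def)
next
  case (Cons p ps)
  have "apl (invl (p # ps)) (apl (p # ps) v) = apl (invp p) (apl (invl ps) (apl ps (aprim p v)))"
    by (simp add: invl_def)
  also have "\<dots> = v" using Cons invp_correct[of n p] by simp
  finally show ?case .
qed

lemma invp_valid: "valid n p \<Longrightarrow> \<forall>q\<in>set (invp p). valid n q"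
  by (cases p rule: invp.cases) auto

lemma invl_valid: "(\<forall>p\<in>set ps. valid n p) \<Longrightarrow> (\<forall>q\<in>set (invl ps). valid n q)"
  unfolding invl_def using invp_valid by fastforce

lemma invl_length: "length (invl ps) \<le> 7 * length ps"
proof (induction ps)
  case Nil then show ?case by (simp add: invl_def)
next
  case (Cons p ps)
  have "length (invp p) \<le> 7" by (cases p rule: invp.cases) auto
  then show ?case using Cons by (simp add: invl_def)
qed

lemma sqrt2_not_rat: "sqrt 2 \<notin> \<rat>"
proof
  assume "sqrt 2 \<in> \<rat>"
  then obtain m n :: nat where n: "n \<noteq> 0" and sq: "\<bar>sqrt 2\<bar> = m / n" and cop: "coprime m n"
    by (rule Rats_abs_nat_div_natE)
  have "real (m^2) = real (2 * n^2)"
  proof -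
    have "real m = sqrt 2 * n" using sq n by (simp add: field_simps)
    hence "real m ^ 2 = 2 * real n ^ 2" by (simp add: power_mult_distrib)
    thus ?thesis by simp
  qed
  hence eq: "m^2 = 2 * n^2" by (simp only: of_nat_eq_iff)
  hence "even (m^2)" by simp
  hence em: "even m" by simp
  then obtain r where "m = 2 * r" by (rule evenE)
  hence "n^2 = 2 * r^2" using eq by (simp add: power_mult_distrib)
  hence "even (n^2)" by simp
  hence en: "even n" by simp
  have "is_unit (2::nat)" using cop em en coprime_common_divisor by blast
  thus False by simp
qed

lemma sqrt2_irr:
  fixes a b c :: int
  assumes "of_int a + sqrt 2 * of_int b = of_int c"
  shows "b = 0"
proof (rule ccontr)
  assume "b \<noteq> 0"
  hence "sqrt 2 = of_int (c - a) / of_int b" using assms by (simp add: field_simps)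
  hence "sqrt 2 \<in> \<rat>" by simp
  thus False using sqrt2_not_rat by blast
qed

lemma ev_conv: "ev (Z a (b + d) c (d - b)) = Complex (of_int a + of_int b * sqrt 2) (of_int c + of_int d * sqrt 2)"
proof -
  have "real_of_int (2 * b) / sqrt 2 = of_int b * sqrt 2" "real_of_int (2 * d) / sqrt 2 = of_int d * sqrt 2"
    by (simp_all add: field_simps real_div_sqrt)
  thus ?thesis by simp
qed

lemma two_div_sqrt: "2 * x / sqrt 2 = x * sqrt (2::real)"
  by (simp add: field_simps real_div_sqrt)

lemma rt_pow: "rt ^ k = complex_of_real (sqrt 2 ^ k)" by (simp add: rt_def)

lemma start:
  assumes us: "unit_state n phi" and cf: "coords_form n \<kappa> phi"
  shows "\<exists>z. invz n z \<kappa> \<and> (\<forall>i<2^n. phi i = st n z \<kappa> i)"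
proof -
  have "\<forall>x<2^n. \<exists>zz. phi x = ev zz / rt ^ \<kappa>"
  proof (intro allI impI)
    fix x :: nat assume "x < 2^n"
    then obtain a b c d :: int where "phi x = Complex (of_int a + of_int b * sqrt 2) (of_int c + of_int d * sqrt 2)
              / complex_of_real (sqrt 2 ^ \<kappa>)" using cf unfolding coords_form_def by blast
    thus "\<exists>zz. phi x = ev zz / rt ^ \<kappa>" by (intro exI[of _ "Z a (b + d) c (d - b)"]) (simp add: two_div_sqrt rt_pow)
  qed
  then obtain z where z: "\<forall>x<2^n. phi x = ev (z x) / rt ^ \<kappa>" by metis
  have cm: "(cmod (phi i))^2 = (of_int (nx (z i)) + sqrt 2 * of_int (ny (z i))) / 2^\<kappa>" if "i < 2^n" for i
  proof -
    have "cmod (phi i) = cmod (ev (z i)) / sqrt 2 ^ \<kappa>" using z that by (simp add: rt_pow norm_divide norm_power)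
    hence "(cmod (phi i))^2 = (cmod (ev (z i)))^2 / (sqrt 2 ^ \<kappa>)^2" by (simp add: power_divide)
    also have "(sqrt 2 ^ \<kappa>)^2 = (2::real)^\<kappa>" by (simp add: power2_eq_square power_mult_distrib[symmetric])
    finally show ?thesis by (simp add: norm_ev)
  qed
  have "1 = (\<Sum>i<2^n. (cmod (phi i))^2)" using us by (simp add: unit_state_def)
  also have "\<dots> = (\<Sum>i<2^n. (of_int (nx (z i)) + sqrt 2 * of_int (ny (z i))) / 2^\<kappa>)"
    using cm by (intro sum.cong) auto
  also have "\<dots> = (\<Sum>i<2^n. of_int (nx (z i)) + sqrt 2 * of_int (ny (z i))) / 2^\<kappa>"
    by (rule sum_divide_distrib[symmetric])
  also have "(\<Sum>i<2^n. of_int (nx (z i)) + sqrt 2 * of_int (ny (z i))) =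
      of_int (\<Sum>i<2^n. nx (z i)) + sqrt 2 * of_int (\<Sum>i<2^n. ny (z i))"
    by (simp only: sum.distrib sum_distrib_left of_int_sum)
  finally have h: "1 = (of_int (\<Sum>i<2^n. nx (z i)) + sqrt 2 * of_int (\<Sum>i<2^n. ny (z i))) / (2::real)^\<kappa>" .
  have e: "of_int (\<Sum>i<2^n. nx (z i)) + sqrt 2 * of_int (\<Sum>i<2^n. ny (z i)) = of_int (2^\<kappa>)"
    using h by (simp add: eq_divide_eq)
  have "(\<Sum>i<2^n. ny (z i)) = 0" by (rule sqrt2_irr[OF e])
  moreover have "(\<Sum>i<2^n. nx (z i)) = 2^\<kappa>" using e calculation
    by (simp only: of_int_0 mult_zero_right add_0_right of_int_eq_iff)
  ultimately show ?thesis using z by (intro exI[of _ z]) (auto simp: invz_def st_def)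
qed

lemma nx_nonneg: "nx z \<ge> 0" by (cases z) simp

lemma final0:
  assumes "invz n z 0"
  shows "\<exists>x0 c. x0 < 2^n \<and> cmod c = 1 \<and> st n z 0 = (\<lambda>i. if i = x0 then c else 0)"
proof -
  have s1: "(\<Sum>i<2^n. nx (z i)) = 1" "(\<Sum>i<2^n. ny (z i)) = 0" using assms by (auto simp: invz_def)
  obtain x0 where x0: "x0 < 2^n" "nx (z x0) \<noteq> 0"
  proof (rule ccontr)
    assume "\<not> thesis"
    hence "\<forall>i<2^n. nx (z i) = 0" using that by blast
    hence "(\<Sum>i<2^n. nx (z i)) = 0" by simp
    thus False using s1 by simp
  qed
  have split: "(\<Sum>i<2^n. f i) = f x0 + (\<Sum>i\<in>{..<2^n} - {x0}. f i)" for f :: "nat \<Rightarrow> int"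
    using x0 by (simp add: sum.remove)
  have rest: "(\<Sum>i\<in>{..<2^n} - {x0}. nx (z i)) \<ge> 0" by (intro sum_nonneg) (simp add: nx_nonneg)
  have "nx (z x0) \<ge> 1" using x0 nx_nonneg[of "z x0"] by linarith
  hence r0: "(\<Sum>i\<in>{..<2^n} - {x0}. nx (z i)) = 0" using split[of "\<lambda>i. nx (z i)"] s1 rest by linarith
  hence nx1: "nx (z x0) = 1" using split[of "\<lambda>i. nx (z i)"] s1 by linarith
  have zero: "z i = Z 0 0 0 0" if "i < 2^n" "i \<noteq> x0" for i
  proof -
    have "\<forall>j\<in>{..<2^n} - {x0}. nx (z j) = 0"
      using r0 by (subst (asm) sum_nonneg_eq_0_iff) (auto simp: nx_nonneg)
    thus ?thesis using that nx0 by auto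
  qed
  have "(\<Sum>i\<in>{..<2^n} - {x0}. ny (z i)) = 0" by (intro sum.neutral) (auto simp: zero)
  hence ny0: "ny (z x0) = 0" using split[of "\<lambda>i. ny (z i)"] s1 by simp
  have "(cmod (ev (z x0)))^2 = 1" using norm_ev[of "z x0"] nx1 ny0 by simp
  hence c1: "cmod (ev (z x0)) = 1" by (smt (verit) norm_ge_zero power2_eq_1_iff)
  have "st n z 0 = (\<lambda>i. if i = x0 then ev (z x0) else 0)"
    using x0 zero by (auto simp: st_def fun_eq_iff complex_eq_iff)
  thus ?thesis using x0 c1 by blast
qed


lemma circ_app[simp]: "circuit_on m (gs @ hs) = (circuit_on m gs \<and> circuit_on m hs)"
  by (auto simp: circuit_on_def)
lemma circ_cons[simp]: "circuit_on m (g # hs) = (gate_ok m g \<and> circuit_on m hs)"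
  by (auto simp: circuit_on_def)
lemma circ_nil[simp]: "circuit_on m []" by (simp add: circuit_on_def)
lemma circ_rep[simp]: "circuit_on m (replicate k g) = (k = 0 \<or> gate_ok m g)"
  by (auto simp: circuit_on_def)

lemma toff_len: "length (toff a b t) = 37" by (simp add: toff_def ccz_def cj_def)
lemma toff_ok: "a < m \<Longrightarrow> b < m \<Longrightarrow> t < m \<Longrightarrow> a \<noteq> b \<Longrightarrow> b \<noteq> t \<Longrightarrow> a \<noteq> t \<Longrightarrow> circuit_on m (toff a b t)"
  by (auto simp: toff_def ccz_def cj_def)

lemma pal_len: "length (pal cs es) \<le> 74 * length es"
  by (induction cs es rule: pal.induct) (auto simp: toff_len)

lemma pal_ok: "distinct (cs @ es) \<Longrightarrow> (\<forall>q\<in>set (cs @ es). q < m) \<Longrightarrow> circuit_on m (pal cs es)"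
  by (induction cs es rule: pal.induct) (auto intro!: toff_ok)

lemma ladder_len: "length (ladder cs t ds) \<le> 148 * (length cs + 1)"
proof -
  have "length (ladder cs t ds) \<le> 74 * length (t # take (length cs - 2) ds) + 74 * length (take (length cs - 2) ds)"
    unfolding ladder_def length_append by (intro add_mono pal_len)
  also have "\<dots> \<le> 148 * (length cs + 1)" by simp
  finally show ?thesis .
qed

lemma set_tl_sub: "set (tl cs) \<subseteq> set cs" by (cases cs) auto

lemma ladder_ok:
  assumes "distinct (t # cs @ ds)" "\<forall>q\<in>set (t # cs @ ds). q < m"
  shows "circuit_on m (ladder cs t ds)"
proof -
  have s: "set (take (length cs - 2) ds) \<subseteq> set ds" by (rule set_take_subset)
  have d: "distinct (take (length cs - 2) ds)" using assms(1) by simp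
  have d1: "distinct (cs @ t # take (length cs - 2) ds)" using assms(1) s d by auto
  have d2: "distinct (tl cs @ take (length cs - 2) ds)" using d1 by (cases cs) auto
  have "circuit_on m (pal cs (t # take (length cs - 2) ds))" using d1 assms(2) s by (intro pal_ok) auto
  moreover have "circuit_on m (pal (tl cs) (take (length cs - 2) ds))" using d2 assms(2) s
    using set_tl_sub[of cs] by (intro pal_ok) auto
  ultimately show ?thesis unfolding ladder_def by simp
qed

lemma Xc_ok: "q < m \<Longrightarrow> circuit_on m (Xc q)" by (simp add: Xc_def)

lemma mcx_len: "length (mcx C a d) \<le> 600 * (length C + 1)"
proof -
  consider "length C = 0" | "length C = 1" | "2 \<le> length C \<and> length C \<le> 3" | "4 \<le> length C" by linarith
  then show ?thesis
  proof cases
    case 3 then show ?thesis using ladder_len[of C a "[d]"] by (auto simp: mcx_def)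
  next
    case 4
    define k where "k = (length C + 1) div 2"
    have "C \<noteq> []" using 4 by auto
    hence "length (mcx C a d) = 2 * length (ladder (take k C) d (drop k C @ [a])) + 2 * length (ladder (d # drop k C) a (take k C))"
      using 4 by (simp add: mcx_def Let_def k_def)
    also have "\<dots> \<le> 2 * (148 * (length (take k C) + 1)) + 2 * (148 * (length (d # drop k C) + 1))"
      by (intro add_mono mult_le_mono2 ladder_len)
    also have "\<dots> \<le> 600 * (length C + 1)" using 4 by simp
    finally show ?thesis .
  qed (auto simp: mcx_def Xc_def)
qed

lemma mcx_ok:
  assumes "distinct (a # d # C)" "\<forall>q\<in>set (a # d # C). q < m"
  shows "circuit_on m (mcx C a d)"
proof -
  consider "length C = 0" | "length C = 1" | "2 \<le> length C \<and> length C \<le> 3" | "4 \<le> length C" by linarith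
  then show ?thesis
  proof cases
    case 1 then show ?thesis using assms by (auto simp: mcx_def Xc_def)
  next
    case 2
    then obtain c where "C = [c]" by (cases C) auto
    then show ?thesis using assms by (auto simp: mcx_def)
  next
    case 3 then show ?thesis using assms by (auto simp: mcx_def intro!: ladder_ok)
  next
    case 4
    define k where "k = (length C + 1) div 2"
    have C: "C = take k C @ drop k C" by simp
    have d: "distinct (a # d # take k C @ drop k C)" using assms C by metis
    have s: "set (take k C) \<subseteq> set C" "set (drop k C) \<subseteq> set C" by (auto dest: in_set_takeD in_set_dropD)
    have dj: "set (take k C) \<inter> set (drop k C) = {}" using assms(1)
      by (intro set_take_disj_set_drop_if_distinct) auto
    have o1: "circuit_on m (ladder (take k C) d (drop k C @ [a]))"
      using dj assms s by (intro ladder_ok) auto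
    have o2: "circuit_on m (ladder (d # drop k C) a (take k C))"
      using dj assms s by (intro ladder_ok) auto
    have "C \<noteq> []" using 4 by auto
    then show ?thesis using 4 o1 o2 by (simp add: mcx_def Let_def k_def)
  qed
qed

lemma kcirc_len: "length (kcirc k a j) \<le> 15"
  by (cases k) (simp_all add: ch_def cdm_def cdmi_def cz_def)
lemma cgate_len: "length (cgate b k a j) \<le> 23"
  using kcirc_len[of k a j] by (simp add: cgate_def Xc_def)
lemma kcirc_ok: "a < m \<Longrightarrow> j < m \<Longrightarrow> a \<noteq> j \<Longrightarrow> circuit_on m (kcirc k a j)"
  by (cases k) (auto simp: ch_def cdm_def cdmi_def cz_def)
lemma cgate_ok: "a < m \<Longrightarrow> j < m \<Longrightarrow> a \<noteq> j \<Longrightarrow> circuit_on m (cgate b k a j)"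
  by (auto simp: cgate_def Xc_def kcirc_ok)

lemma len_Xcs: "length (concat (map Xc E)) = 4 * length E"
  by (induction E) (auto simp: Xc_def)

lemma least_j:
  fixes x y :: nat
  assumes "x < 2^n" "y < 2^n" "x \<noteq> y"
  shows "bit x (LEAST j. bit x j \<noteq> bit y j) \<noteq> bit y (LEAST j. bit x j \<noteq> bit y j)"
        "(LEAST j. bit x j \<noteq> bit y j) < n"
proof -
  have ex: "\<exists>j. bit x j \<noteq> bit y j" using assms bit_eq_iff by blast
  show hj: "bit x (LEAST j. bit x j \<noteq> bit y j) \<noteq> bit y (LEAST j. bit x j \<noteq> bit y j)" by (rule LeastI_ex[OF ex])
  show "(LEAST j. bit x j \<noteq> bit y j) < n"
  proof (rule ccontr)
    assume "\<not> (LEAST j. bit x j \<noteq> bit y j) < n"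
    hence "\<not> bit x (LEAST j. bit x j \<noteq> bit y j)" "\<not> bit y (LEAST j. bit x j \<noteq> bit y j)"
      using assms(1,2) lt_pow_bits by auto
    thus False using hj by simp
  qed
qed

lemma tl2circ_len: "n \<ge> 1 \<Longrightarrow> length (tl2circ n k x y) \<le> 2500 * n"
proof -
  assume n1: "n \<ge> 1"
  define j where "j = (LEAST j. bit x j \<noteq> bit y j)"
  define b where "b = bit x j"
  define base where "base = (if b then y else x)"
  define D where "D = filter (\<lambda>q. q \<noteq> j \<and> bit x q \<noteq> bit y q) [0..<n]"
  define E where "E = filter (\<lambda>q. q \<noteq> j \<and> \<not> bit base q) [0..<n]"
  define C where "C = filter (\<lambda>q. q \<noteq> j) [0..<n]"
  have lD: "length D \<le> n" "length E \<le> n" "length C \<le> n" unfolding D_def E_def C_def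
    by (metis length_filter_le length_upt minus_nat.diff_0)+
  have e: "tl2circ n k x y = map (CNOTg j) D @ concat (map Xc E) @ mcx C n j @ cgate b k n j
      @ mcx C n j @ concat (map Xc E) @ map (CNOTg j) D"
    unfolding tl2circ_def Let_def j_def[symmetric] b_def[symmetric] base_def[symmetric]
      D_def[symmetric] E_def[symmetric] C_def[symmetric] ..
  have "length (tl2circ n k x y) \<le> 2 * length D + 2 * (4 * length E) + 2 * (600 * (length C + 1)) + 23"
    unfolding e using mcx_len[of C n j] cgate_len[of b k n j] by (simp add: len_Xcs)
  also have "\<dots> \<le> 2500 * n" using lD n1 by simp
  finally show ?thesis .
qed

lemma tl2circ_ok:
  assumes "x < 2^n" "y < 2^n" "x \<noteq> y"
  shows "circuit_on (n + 1) (tl2circ n k x y)"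
proof -
  define j where "j = (LEAST j. bit x j \<noteq> bit y j)"
  have jn: "j < n" using least_j[OF assms] unfolding j_def by simp
  define b where "b = bit x j"
  define base where "base = (if b then y else x)"
  define D where "D = filter (\<lambda>q. q \<noteq> j \<and> bit x q \<noteq> bit y q) [0..<n]"
  define E where "E = filter (\<lambda>q. q \<noteq> j \<and> \<not> bit base q) [0..<n]"
  define C where "C = filter (\<lambda>q. q \<noteq> j) [0..<n]"
  have e: "tl2circ n k x y = map (CNOTg j) D @ concat (map Xc E) @ mcx C n j @ cgate b k n j
      @ mcx C n j @ concat (map Xc E) @ map (CNOTg j) D"
    unfolding tl2circ_def Let_def j_def[symmetric] b_def[symmetric] base_def[symmetric]
      D_def[symmetric] E_def[symmetric] C_def[symmetric] ..
  have c1: "circuit_on (n + 1) (map (CNOTg j) D)" using jn by (auto simp: circuit_on_def D_def)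
  have c2: "circuit_on (n + 1) (concat (map Xc E))" by (auto simp: circuit_on_def E_def Xc_def)
  have c3: "circuit_on (n + 1) (mcx C n j)" using jn by (intro mcx_ok) (auto simp: C_def)
  have c4: "circuit_on (n + 1) (cgate b k n j)" using jn by (intro cgate_ok) auto
  show ?thesis unfolding e using c1 c2 c3 c4 by simp
qed

fun pcirc :: "nat \<Rightarrow> prim \<Rightarrow> gate list" where
  "pcirc n (P2 k x y) = tl2circ n k x y"
| "pcirc n (P1 y) = (if y = 1 then [Tg 0] else Xc 0 @ [Tg 0] @ Xc 0)"

lemma pcirc_len: "n \<ge> 1 \<Longrightarrow> length (pcirc n p) \<le> 2500 * n"
  by (cases p) (auto simp: tl2circ_len Xc_def)

lemma pcirc_ok: "valid n p \<Longrightarrow> circuit_on (n + 1) (pcirc n p)"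
proof (cases p)
  case (P2 k x y)
  assume "valid n p"
  then show ?thesis using P2 tl2circ_ok[of x n y k] by simp
qed (auto simp: Xc_def)

lemma b0: "i < 2 \<Longrightarrow> bit i 0 = (i = (1::nat))"
  by (auto simp: bit_0 less_2_cases_iff)

lemma pcirc_correct: "valid n p \<Longrightarrow> run (pcirc n p) (with_ancilla n v) = with_ancilla n (aprim p v)"
proof (cases p)
  case (P2 k x y)
  assume "valid n p"
  then show ?thesis using P2 tl2circ_correct by simp
next
  case (P1 y)
  assume "valid n p"
  hence y: "n = 1" "y < 2" using P1 by auto
  let ?u = "with_ancilla n v"
  have r: "run (pcirc n p) ?u = (\<lambda>i. (if bit i 0 = (y = 1) then w else 1) * ?u i)"
  proof (cases "y = 1")
    case True
    hence "pcirc n p = [Tg 0]" using P1 by simp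
    hence "run (pcirc n p) ?u = run [Tg 0] ?u" by simp
    also have "\<dots> = (\<lambda>i. (if bit i 0 = (y = 1) then w else 1) * ?u i)"
      using True by (simp only: run_T) (simp add: dg_def fun_eq_iff)
    finally show ?thesis .
  next
    case False
    have "run (pcirc n p) ?u = run (Xc 0) (run [Tg 0] (run (Xc 0) ?u))" using P1 False by simp
    also have "\<dots> = (\<lambda>i. (if bit i 0 = (y = 1) then w else 1) * ?u i)"
      using False by (simp only: run_Xc run_T) (simp add: dg_def fun_eq_iff)
    finally show ?thesis .
  qed
  show ?thesis
  proof
    fix i
    show "run (pcirc n p) ?u i = with_ancilla n (aprim p v) i"
    proof (cases "i < 2")
      case True
      then show ?thesis unfolding r using P1 y b0[OF True] b0[OF y(2)] by (auto simp: with_ancilla_def)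
    next
      case False
      then show ?thesis unfolding r using P1 y by (auto simp: with_ancilla_def)
    qed
  qed
qed


lemma run_concat: "(\<forall>p\<in>set ps. valid n p) \<Longrightarrow>
   run (concat (map (pcirc n) ps)) (with_ancilla n v) = with_ancilla n (apl ps v)"
  by (induction ps arbitrary: v) (auto simp: pcirc_correct)

lemma ok_concat: "(\<forall>p\<in>set ps. valid n p) \<Longrightarrow> circuit_on (n + 1) (concat (map (pcirc n) ps))"
  by (induction ps) (auto simp: pcirc_ok simp del: One_nat_def)

lemma len_concat: "n \<ge> 1 \<Longrightarrow> length (concat (map (pcirc n) ps)) \<le> 2500 * n * length ps"
proof (induction ps)
  case Nil then show ?case by simp
next
  case (Cons p ps)
  then show ?case using pcirc_len[of n p] by simp
qed

lemma delta_c: "x < (N::nat) \<Longrightarrow> (\<Sum>i<N. if i = x then c else 0) = (c::complex)"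
proof (induction N)
  case (Suc N)
  then show ?case
  proof (cases "x = N")
    case True
    have "(\<Sum>i<N. if i = x then c else 0) = 0" using True by (intro sum.neutral) auto
    then show ?thesis using True by simp
  qed simp
qed simp

lemma inner_e: "x0 < 2^n \<Longrightarrow> inner n (\<lambda>i. if i = x0 then 1 else 0) u = u x0"
proof -
  assume x0: "x0 < 2^n"
  have "inner n (\<lambda>i. if i = x0 then 1 else 0) u = (\<Sum>i<2^n. if i = x0 then u x0 else 0)"
    unfolding inner_def by (intro sum.cong) auto
  thus ?thesis using delta_c[OF x0] by simp
qed

lemma inner_scale: "inner n (\<lambda>i. c * e i) u = cnj c * inner n e u"
  by (simp add: inner_def sum_distrib_left algebra_simps)

lemma main:
  assumes n1: "1 \<le> n" and k1: "1 \<le> \<kappa>" and us: "unit_state n phi" and cf: "coords_form n \<kappa> phi"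
  shows "\<exists>gs. implements_with_ancilla n gs (reflection n phi) \<and> length gs \<le> 100000 * 2^n * n * \<kappa>"
proof -
  obtain z where zi: "invz n z \<kappa>" and zp: "\<forall>i<2^n. phi i = st n z \<kappa> i" using start[OF us cf] by blast
  obtain ps z' where pv: "\<forall>p\<in>set ps. valid n p" and pl: "length ps \<le> 4 * 2^n * \<kappa>"
    and pa: "apl ps (st n z \<kappa>) = st n z' 0" and zi': "invz n z' 0" using reduce[OF n1 zi] by blast
  obtain x0 c where x0: "x0 < 2^n" and c1: "cmod c = 1" and fz: "st n z' 0 = (\<lambda>i. if i = x0 then c else 0)"
    using final0[OF zi'] by blast
  define x1 where "x1 = (if x0 = 0 then 1 else (0::nat))"
  have "(2::nat) \<le> 2^n" using n1 by (metis power_increasing power_one_right one_le_numeral)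
  hence x1: "x1 < 2^n" "x1 \<noteq> x0" by (auto simp: x1_def)
  define allp where "allp = ps @ [P2 KZ x1 x0] @ invl ps"
  have av: "\<forall>p\<in>set allp. valid n p" using pv invl_valid[OF pv] x0 x1 by (auto simp: allp_def)
  define gs where "gs = concat (map (pcirc n) allp)"
  define e where "e = (\<lambda>i. if i = x0 then (1::complex) else 0)"
  define W where "W = apl ps"
  define V where "V = apl (invl ps)"
  define \<phi> where "\<phi> = st n z \<kappa>"
  have c0: "c \<noteq> 0" using c1 by auto
  have ccnj: "cnj c * c = 1"
  proof -
    have "c * cnj c = complex_of_real ((cmod c)^2)" by (rule complex_norm_square[symmetric])
    thus ?thesis using c1 by (simp add: mult.commute)
  qed
  have Wphi: "W \<phi> = (\<lambda>i. c * e i)" using pa fz by (auto simp: W_def \<phi>_def e_def fun_eq_iff)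
  have VW: "V (W u) = u" for u unfolding V_def W_def by (rule invl_correct[OF pv])
  have Vlin: "V (\<lambda>i. a * u i + b * u' i) = (\<lambda>i. a * V u i + b * V u' i)" for a b u u'
    unfolding V_def by (rule apl_lin)
  have Ve: "V e i = \<phi> i / c" for i
  proof -
    have "\<phi> = V (W \<phi>)" by (simp add: VW)
    also have "\<dots> = V (\<lambda>i. c * e i + 0 * e i)" by (simp add: Wphi)
    also have "\<dots> = (\<lambda>i. c * V e i)" unfolding Vlin by simp
    finally show ?thesis using c0 by (simp add: fun_eq_iff field_simps)
  qed
  have R0: "aprim (P2 KZ x1 x0) u = (\<lambda>i. 1 * u i + (- 2 * u x0) * e i)" for u
    using x1 by (auto simp: tl2_def dgm_def e_def fun_eq_iff)
  have Wx0: "W v x0 = inner n \<phi> v / cnj c" for v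
  proof -
    have "inner n (W \<phi>) (W v) = inner n \<phi> v" unfolding W_def by (rule apl_inner[OF pv])
    hence "cnj c * W v x0 = inner n \<phi> v" unfolding Wphi inner_scale e_def inner_e[OF x0] .
    thus ?thesis using c0 by (simp add: field_simps)
  qed
  have apl_all: "apl allp v i = v i - 2 * \<phi> i * inner n \<phi> v" for v i
  proof -
    have "apl allp v = V (aprim (P2 KZ x1 x0) (W v))" by (simp add: allp_def V_def W_def)
    also have "\<dots> = (\<lambda>i. 1 * v i + (- 2 * W v x0) * V e i)" unfolding R0 Vlin VW ..
    finally have "apl allp v i = v i - 2 * W v x0 * V e i" by simp
    also have "\<dots> = v i - 2 * \<phi> i * inner n \<phi> v * (1 / (cnj c * c))"
      unfolding Wx0 Ve using c0 by (simp add: field_simps)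
    finally show ?thesis using ccnj by simp
  qed
  have inner_eq: "inner n \<phi> v = inner n phi v" for v
    unfolding inner_def using zp by (intro sum.cong) (auto simp: \<phi>_def)
  have impl: "implements_with_ancilla n gs (reflection n phi)"
    unfolding implements_with_ancilla_def
  proof (intro conjI allI impI)
    show "circuit_on (n + 1) gs" unfolding gs_def by (rule ok_concat[OF av])
    fix v :: "nat \<Rightarrow> complex" and x :: nat
    assume "x < 2^(n+1)"
    show "run gs (with_ancilla n v) x = with_ancilla n (reflection n phi v) x"
      unfolding gs_def run_concat[OF av]
      using zp inner_eq[unfolded \<phi>_def] by (auto simp: with_ancilla_def apl_all reflection_def \<phi>_def)
  qed
  have "length gs \<le> 2500 * n * length allp" unfolding gs_def by (rule len_concat[OF n1])
  also have "length allp \<le> 8 * length ps + 1" using invl_length[of ps] by (simp add: allp_def)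
  hence "2500 * n * length allp \<le> 2500 * n * (8 * length ps + 1)" by (rule mult_le_mono2)
  also have "8 * length ps + 1 \<le> 33 * (2^n * \<kappa>)"
  proof -
    have "1 \<le> 2^n * \<kappa>" using k1 by simp
    thus ?thesis using pl by linarith
  qed
  hence "2500 * n * (8 * length ps + 1) \<le> 2500 * n * (33 * (2^n * \<kappa>))" by (rule mult_le_mono2)
  also have "\<dots> \<le> 100000 * 2^n * n * \<kappa>" by simp
  finally show ?thesis using impl by blast
qed

theorem lemma4:
  "\<exists>C::real. \<forall>n \<kappa> (phi :: nat \<Rightarrow> complex).
      1 \<le> n \<longrightarrow> 1 \<le> \<kappa> \<longrightarrow> unit_state n phi \<longrightarrow> coords_form n \<kappa> phi \<longrightarrow>
      (\<exists>gs. implements_with_ancilla n gs (reflection n phi) \<and>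
            real (length gs) \<le> C * 2^n * real n * real \<kappa>)"
proof (intro exI[of _ 100000] allI impI)
  fix n \<kappa> :: nat and phi :: "nat \<Rightarrow> complex"
  assume "1 \<le> n" "1 \<le> \<kappa>" "unit_state n phi" "coords_form n \<kappa> phi"
  then obtain gs where "implements_with_ancilla n gs (reflection n phi)" "length gs \<le> 100000 * 2^n * n * \<kappa>"
    using main by blast
  moreover have "real (length gs) \<le> 100000 * 2^n * real n * real \<kappa>"
    using calculation(2) by (metis (mono_tags) of_nat_le_iff of_nat_mult of_nat_numeral of_nat_power)
  ultimately show "\<exists>gs. implements_with_ancilla n gs (reflection n phi) \<and>
            real (length gs) \<le> 100000 * 2^n * real n * real \<kappa>" by blast
qed


end
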